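(* Let $\lambda_\pm : \mathbb{R} \to \mathbb{R}_\pm$ be defined by $\lambda_\pm(x) = x \pm \sqrt{1+x^2}$ (these are increasing bijections onto the positive and negative reals respectively), and let \[ p_\gamma' := \frac{p}{\sqrt{p^2 + |q|^2\cosh^{-2}(2\gamma)}} \in (-1,1). \] Define subsets $\sigma_\pm(U) \subset \mathbb{R}_\pm$ by \[ \sigma_\pm(U) = \begin{cases} \{\lambda_\pm(+p\sinh(2\gamma))\}, & a_m < \pm p_\gamma' < a_p, \\ \{\lambda_\pm(-p\sinh(2\gamma))\}, & a_p < \pm p_\gamma' < a_m, \\ \emptyset, & \text{otherwise}. \end{cases} \] Then the set of eigenvalues of $U$ satisfies $\sigma_{\mathrm{p}}(U) = \sigma_-(U) \cup \sigma_+(U)$.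
   Context: Let $L$ be the bilateral left shift on $\ell^2(\mathbb{Z}) = \ell^2(\mathbb{Z};\mathbb{C})$, $(L\Psi)(x) = \Psi(x+1)$; bounded sequences are identified with the corresponding multiplication operators. Fix $\gamma \in \mathbb{R}$, $p \in (-1,1)$, $q \in \mathbb{C}$ with $p^2+|q|^2 = 1$, and $a_p, a_m \in (-1,1)$, $b_p, b_m \in \mathbb{C}$ with $a_p^2 + |b_p|^2 = a_m^2 + |b_m|^2 = 1$. Let $a(x) = a_p$, $b(x) = b_p$ for $x \ge 0$ and $a(x) = a_m$, $b(x) = b_m$ for $x < 0$. On $\mathcal{H} = \ell^2(\mathbb{Z};\mathbb{C}^2) \cong \ell^2(\mathbb{Z}) \oplus \ell^2(\mathbb{Z})$ define the (generally non-unitary) two-phase split-step quantum walk $U = SC$, where \[ S = \begin{pmatrix} p & qL \\ \overline{q}L^* & -p \end{pmatrix},\qquad C = \begin{pmatrix} e^{-2\gamma} a & \overline{b} \\ b & -e^{2\gamma} a \end{pmatrix}. \] $\sigma_{\mathrm{p}}(U)$ denotes the set of $\lambda \in \mathbb{C}$ with $\ker(U - \lambda) \neq \{0\}$ in $\mathcal{H}$. $\mathbb{R}_+$ and $\mathbb{R}_-$ denote the sets of positive and negative real numbers. *)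

theory Defs
  imports "HOL-Analysis.Analysis"
begin

text \<open>States in l2(Z; C^2) are represented as functions int => complex * complex.
  The operators L, C, S, U act pointwise on arbitrary sequences; U restricted
  to l2 is the bounded operator of the paper.\<close>

definition ell2Z2 :: "(int \<Rightarrow> complex \<times> complex) set" where
  "ell2Z2 = {\<Psi>. (\<lambda>x. (cmod (fst (\<Psi> x)))\<^sup>2 + (cmod (snd (\<Psi> x)))\<^sup>2) summable_on UNIV}"

definition coin_op :: "real \<Rightarrow> (int \<Rightarrow> real) \<Rightarrow> (int \<Rightarrow> complex)
    \<Rightarrow> (int \<Rightarrow> complex \<times> complex) \<Rightarrow> (int \<Rightarrow> complex \<times> complex)" where
  "coin_op \<gamma> a b \<Psi> = (\<lambda>x.
     (of_real (exp (-2*\<gamma>) * a x) * fst (\<Psi> x) + cnj (b x) * snd (\<Psi> x),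
      b x * fst (\<Psi> x) - of_real (exp (2*\<gamma>) * a x) * snd (\<Psi> x)))"

text \<open>Shift operator S; (L Psi)(x) = Psi(x+1), (L^* Psi)(x) = Psi(x-1).\<close>
definition shift_op :: "real \<Rightarrow> complex
    \<Rightarrow> (int \<Rightarrow> complex \<times> complex) \<Rightarrow> (int \<Rightarrow> complex \<times> complex)" where
  "shift_op p q \<Psi> = (\<lambda>x.
     (of_real p * fst (\<Psi> x) + q * snd (\<Psi> (x + 1)),
      cnj q * fst (\<Psi> (x - 1)) - of_real p * snd (\<Psi> x)))"

definition walk_op :: "real \<Rightarrow> real \<Rightarrow> complex \<Rightarrow> (int \<Rightarrow> real) \<Rightarrow> (int \<Rightarrow> complex)
    \<Rightarrow> (int \<Rightarrow> complex \<times> complex) \<Rightarrow> (int \<Rightarrow> complex \<times> complex)" where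
  "walk_op \<gamma> p q a b = shift_op p q \<circ> coin_op \<gamma> a b"

definition point_spectrum :: "real \<Rightarrow> real \<Rightarrow> complex \<Rightarrow> (int \<Rightarrow> real) \<Rightarrow> (int \<Rightarrow> complex)
    \<Rightarrow> complex set" where
  "point_spectrum \<gamma> p q a b = {z. \<exists>\<Psi>\<in>ell2Z2. \<Psi> \<noteq> (\<lambda>_. (0, 0)) \<and>
      walk_op \<gamma> p q a b \<Psi> = (\<lambda>x. (z * fst (\<Psi> x), z * snd (\<Psi> x)))}"

definition two_phase :: "'a \<Rightarrow> 'a \<Rightarrow> int \<Rightarrow> 'a" where
  "two_phase vp vm x = (if x \<ge> 0 then vp else vm)"

definition lam_plus :: "real \<Rightarrow> real" where
  "lam_plus x = x + sqrt (1 + x\<^sup>2)"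

definition lam_minus :: "real \<Rightarrow> real" where
  "lam_minus x = x - sqrt (1 + x\<^sup>2)"

definition p_gamma' :: "real \<Rightarrow> real \<Rightarrow> complex \<Rightarrow> real" where
  "p_gamma' \<gamma> p q = p / sqrt (p\<^sup>2 + (cmod q)\<^sup>2 / (cosh (2*\<gamma>))\<^sup>2)"

definition sigma_plus :: "real \<Rightarrow> real \<Rightarrow> complex \<Rightarrow> real \<Rightarrow> real \<Rightarrow> complex set" where
  "sigma_plus \<gamma> p q ap am =
     (if am < p_gamma' \<gamma> p q \<and> p_gamma' \<gamma> p q < ap
        then {complex_of_real (lam_plus (p * sinh (2*\<gamma>)))}
      else if ap < p_gamma' \<gamma> p q \<and> p_gamma' \<gamma> p q < am
        then {complex_of_real (lam_plus (- p * sinh (2*\<gamma>)))}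
      else {})"

definition sigma_minus :: "real \<Rightarrow> real \<Rightarrow> complex \<Rightarrow> real \<Rightarrow> real \<Rightarrow> complex set" where
  "sigma_minus \<gamma> p q ap am =
     (if am < - p_gamma' \<gamma> p q \<and> - p_gamma' \<gamma> p q < ap
        then {complex_of_real (lam_minus (p * sinh (2*\<gamma>)))}
      else if ap < - p_gamma' \<gamma> p q \<and> - p_gamma' \<gamma> p q < am
        then {complex_of_real (lam_minus (- p * sinh (2*\<gamma>)))}
      else {})"

end

theory Submission
  imports Defs
begin

lemma shift_invol:
  assumes "p^2 + (cmod q)^2 = 1"
  shows "shift_op p q (shift_op p q \<Phi>) = \<Phi>"
proof
  fix x
  have n2: "(cmod q)^2 = 1 - p^2" using assms by simp
  have qq: "q * cnj q = 1 - (complex_of_real p)^2"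
    using complex_norm_square[of q] n2 by simp
  have k1: "complex_of_real p * (complex_of_real p * u + q * v) + q * (cnj q * u - complex_of_real p * v) = u" for u v
    using qq by algebra
  have k2: "cnj q * (complex_of_real p * u + q * v) - complex_of_real p * (cnj q * u - complex_of_real p * v) = v" for u v
    using qq by algebra
  show "shift_op p q (shift_op p q \<Phi>) x = \<Phi> x"
    unfolding shift_op_def by (simp add: k1 k2)
qed

lemma shift_scale:
  "shift_op p q (\<lambda>x. (z * fst (\<Phi> x), z * snd (\<Phi> x)))
     = (\<lambda>x. (z * fst (shift_op p q \<Phi> x), z * snd (shift_op p q \<Phi> x)))"
  unfolding shift_op_def by (simp add: algebra_simps)

lemma ell2_decay:
  assumes "\<Psi> \<in> ell2Z2" "inj g"
  shows "(\<lambda>n. fst (\<Psi> (g n))) \<longlonglongrightarrow> 0" "(\<lambda>n. snd (\<Psi> (g n))) \<longlonglongrightarrow> 0"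
proof -
  define h where "h x = (cmod (fst (\<Psi> x)))\<^sup>2 + (cmod (snd (\<Psi> x)))\<^sup>2" for x
  have "h summable_on UNIV" using assms(1) unfolding ell2Z2_def h_def by simp
  hence "h summable_on range g" by (rule summable_on_subset) auto
  hence "(h \<circ> g) summable_on UNIV" using summable_on_reindex[OF inj_on_subset[OF assms(2)]] by auto
  hence "summable (h \<circ> g)"
    by (subst summable_on_UNIV_nonneg_real_iff[symmetric]) (auto simp: h_def)
  hence h0: "(\<lambda>n. h (g n)) \<longlonglongrightarrow> 0" using summable_LIMSEQ_zero by (simp add: o_def)
  have "(\<lambda>n. (cmod (fst (\<Psi> (g n))))\<^sup>2) \<longlonglongrightarrow> 0"
    by (rule tendsto_sandwich[OF _ _ tendsto_const h0]) (auto simp: h_def)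
  hence "(\<lambda>n. sqrt ((cmod (fst (\<Psi> (g n))))\<^sup>2)) \<longlonglongrightarrow> sqrt 0" by (rule tendsto_real_sqrt)
  hence "(\<lambda>n. cmod (fst (\<Psi> (g n)))) \<longlonglongrightarrow> 0" by simp
  thus "(\<lambda>n. fst (\<Psi> (g n))) \<longlonglongrightarrow> 0" by (simp add: tendsto_norm_zero_iff)
  have "(\<lambda>n. (cmod (snd (\<Psi> (g n))))\<^sup>2) \<longlonglongrightarrow> 0"
    by (rule tendsto_sandwich[OF _ _ tendsto_const h0]) (auto simp: h_def)
  hence "(\<lambda>n. sqrt ((cmod (snd (\<Psi> (g n))))\<^sup>2)) \<longlonglongrightarrow> sqrt 0" by (rule tendsto_real_sqrt)
  hence "(\<lambda>n. cmod (snd (\<Psi> (g n)))) \<longlonglongrightarrow> 0" by simp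
  thus "(\<lambda>n. snd (\<Psi> (g n))) \<longlonglongrightarrow> 0" by (simp add: tendsto_norm_zero_iff)
qed

lemma fwd_ratio:
  fixes g :: "nat \<Rightarrow> complex"
  assumes "\<And>n. g (Suc n) = \<rho> * g n" "g \<longlonglongrightarrow> 0" "g 0 \<noteq> 0"
  shows "cmod \<rho> < 1"
proof (rule ccontr)
  assume "\<not> cmod \<rho> < 1"
  hence r1: "cmod \<rho> \<ge> 1" by simp
  have gn: "g n = \<rho>^n * g 0" for n by (induction n) (auto simp: assms(1))
  have "cmod (g 0) \<le> cmod (g n)" for n
  proof -
    have "1 \<le> cmod \<rho> ^ n" using r1 by (simp add: one_le_power)
    hence "1 * cmod (g 0) \<le> cmod \<rho> ^ n * cmod (g 0)" by (rule mult_right_mono) simp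
    moreover have "cmod (g n) = cmod \<rho> ^ n * cmod (g 0)"
      by (subst gn[of n]) (simp add: norm_mult norm_power)
    ultimately show ?thesis by simp
  qed
  moreover have "(\<lambda>n. cmod (g n)) \<longlonglongrightarrow> 0" using assms(2) by (simp add: tendsto_norm_zero_iff)
  ultimately have "cmod (g 0) \<le> 0" by (intro LIMSEQ_le_const) auto
  thus False using assms(3) by simp
qed

lemma bwd_ratio:
  fixes g :: "nat \<Rightarrow> complex"
  assumes "\<And>n. g n = \<rho> * g (Suc n)" "g \<longlonglongrightarrow> 0" "g 0 \<noteq> 0"
  shows "cmod \<rho> > 1"
proof (rule ccontr)
  assume "\<not> cmod \<rho> > 1"
  hence r1: "cmod \<rho> \<le> 1" by simp
  have gn: "g 0 = \<rho>^n * g n" for n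
  proof (induction n)
    case 0 show ?case by simp
  next
    case (Suc n)
    have "\<rho>^Suc n * g (Suc n) = \<rho>^n * (\<rho> * g (Suc n))" by (simp add: algebra_simps)
    also have "\<dots> = \<rho>^n * g n" using assms(1)[of n] by simp
    finally have calc: "\<rho>^Suc n * g (Suc n) = \<rho>^n * g n" .
    show ?case by (rule trans[OF Suc.IH calc[symmetric]])
  qed
  have "cmod (g 0) \<le> cmod (g n)" for n
  proof -
    have "cmod \<rho> ^ n \<le> 1" using r1 by (simp add: power_le_one)
    hence "cmod \<rho> ^ n * cmod (g n) \<le> 1 * cmod (g n)" by (rule mult_right_mono) simp
    moreover have "cmod (g 0) = cmod \<rho> ^ n * cmod (g n)"
      by (subst gn[of n]) (simp add: norm_mult norm_power)
    ultimately show ?thesis by simp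
  qed
  moreover have "(\<lambda>n. cmod (g n)) \<longlonglongrightarrow> 0" using assms(2) by (simp add: tendsto_norm_zero_iff)
  ultimately have "cmod (g 0) \<le> 0" by (intro LIMSEQ_le_const) auto
  thus False using assms(3) by simp
qed

lemma const_norm_zero:
  fixes w :: "nat \<Rightarrow> complex"
  assumes "\<And>n. cmod (w n) = C" "w \<longlonglongrightarrow> 0"
  shows "C = 0"
proof -
  have "(\<lambda>n. cmod (w n)) \<longlonglongrightarrow> 0" using assms(2) by (simp add: tendsto_norm_zero_iff)
  hence "(\<lambda>n. C) \<longlonglongrightarrow> 0" using assms(1) by simp
  thus ?thesis using LIMSEQ_const_iff by blast
qed

definition Qf :: "complex \<Rightarrow> complex \<Rightarrow> complex \<Rightarrow> complex \<Rightarrow> complex \<Rightarrow> complex \<Rightarrow> complex \<Rightarrow> complex \<Rightarrow> complex \<Rightarrow> complex" where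
 "Qf cc cc' z p q cq a X Y = z*cq*(cc'*a - z*p)*X^2 + (1 - z*p*a*(cc+cc') + z^2*(p^2 - q*cq))*X*Y - z*q*(cc*a - z*p)*Y^2"

lemma W1:
  fixes cc cc' z p q cq a b cb X Y Z V :: complex
  assumes E1: "cc' * a * X + cb * Z = z * (p * X + q * Y)"
  and E2: "b * X - cc * a * Z = z * (cq * V - p * Z)"
  and "b * cb = 1 - a^2" "cc * cc' = 1"
  shows "z * cq * cb * (V * Y - Z * X) = Qf cc cc' z p q cq a X Y"
  using assms unfolding Qf_def by algebra

lemma W2:
  fixes cc cc' z p q cq a b cb X Y Y2 X2 :: complex
  assumes E1: "cc' * a * X2 + cb * Y = z * (p * X2 + q * Y2)"
  and E2: "b * X2 - cc * a * Y = z * (cq * X - p * Y)"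
  and "b * cb = 1 - a^2" "cc * cc' = 1"
  shows "z * q * b * (X * Y2 - Y * X2) = Qf cc cc' z p q cq a X Y"
  using assms unfolding Qf_def by algebra

lemma lam_plus_props: "lam_plus x > 0" "(lam_plus x)^2 - 2*x*lam_plus x - 1 = 0"
proof -
  have S2: "(sqrt (1 + x^2))^2 = 1 + x^2" by simp
  have "\<bar>x\<bar> < sqrt (1 + x^2)" by (rule real_less_rsqrt) simp
  thus "lam_plus x > 0" unfolding lam_plus_def by linarith
  show "(lam_plus x)^2 - 2*x*lam_plus x - 1 = 0" unfolding lam_plus_def
    using S2 by (simp add: power2_eq_square algebra_simps)
qed

lemma lam_minus_props: "lam_minus x < 0" "(lam_minus x)^2 - 2*x*lam_minus x - 1 = 0"
proof -
  have S2: "(sqrt (1 + x^2))^2 = 1 + x^2" by simp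
  have "\<bar>x\<bar> < sqrt (1 + x^2)" by (rule real_less_rsqrt) simp
  thus "lam_minus x < 0" unfolding lam_minus_def by linarith
  show "(lam_minus x)^2 - 2*x*lam_minus x - 1 = 0" unfolding lam_minus_def
    using S2 by (simp add: power2_eq_square algebra_simps)
qed

lemma lam_root:
  fixes x l :: real
  assumes "l^2 - 2*x*l - 1 = 0"
  shows "l > 0 \<Longrightarrow> l = lam_plus x" "l < 0 \<Longrightarrow> l = lam_minus x"
proof -
  define S where "S = sqrt (1 + x^2)"
  have S2: "S^2 = 1 + x^2" unfolding S_def by simp
  have Sx: "\<bar>x\<bar> < S" unfolding S_def by (rule real_less_rsqrt) simp
  have "(l - x - S) * (l - x + S) = 0" using assms S2 by (simp add: power2_eq_square algebra_simps)
  hence cases: "l = x + S \<or> l = x - S" by auto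
  show "l > 0 \<Longrightarrow> l = lam_plus x" using cases Sx unfolding lam_plus_def S_def[symmetric] by auto
  show "l < 0 \<Longrightarrow> l = lam_minus x" using cases Sx unfolding lam_minus_def S_def[symmetric] by auto
qed

lemma core_sign:
  fixes c p l \<sigma> \<epsilon> :: real
  assumes c: "c > 0" and p: "-1 < p" "p < 1" and eps: "\<epsilon> = 1 \<or> \<epsilon> = -1" and l: "l \<noteq> 0"
    and rel: "l * (p*\<sigma> - (1 - p^2)) = \<epsilon> * c * \<sigma>"
    and quad: "c^2*\<sigma>^2 + p*(c^2+1)*\<sigma> - (1 - p^2) = 0"
  shows "\<sigma> \<noteq> 0" "p*\<sigma> - (1 - p^2) < 0" "sgn \<sigma> = - \<epsilon> * sgn l"
proof -
  have k: "1 - p^2 > 0" using p by (simp add: abs_square_less_1)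
  show s0: "\<sigma> \<noteq> 0" using quad k by auto
  show neg: "p*\<sigma> - (1 - p^2) < 0"
  proof (rule ccontr)
    assume "\<not> ?thesis"
    hence ge: "p*\<sigma> \<ge> 1 - p^2" by simp
    have "p*(c^2+1)*\<sigma> = (c^2+1)*(p*\<sigma>)" by simp
    also have "\<dots> \<ge> (c^2+1)*(1-p^2)" using ge by (intro mult_left_mono) auto
    finally have "p*(c^2+1)*\<sigma> \<ge> (c^2+1)*(1-p^2)" .
    moreover have "c^2*\<sigma>^2 \<ge> 0" by simp
    moreover have "c^2 * (1-p^2) > 0" using k c by simp
    moreover have "(c^2+1)*(1-p^2) = c^2*(1-p^2) + (1-p^2)" by (simp add: algebra_simps)
    ultimately have "c^2*\<sigma>^2 + p*(c^2+1)*\<sigma> - (1 - p^2) > 0" by linarith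
    thus False using quad by simp
  qed
  have "sgn (l * (p*\<sigma> - (1 - p^2))) = sgn (\<epsilon> * c * \<sigma>)" using rel by simp
  moreover have "sgn (l * (p*\<sigma> - (1 - p^2))) = - sgn l" using neg by (simp add: sgn_mult)
  moreover have "sgn (\<epsilon> * c * \<sigma>) = \<epsilon> * sgn \<sigma>" using eps c by (auto simp: sgn_mult)
  ultimately have h: "- sgn l = \<epsilon> * sgn \<sigma>" by simp
  show "sgn \<sigma> = - \<epsilon> * sgn l" using eps h by (cases "\<epsilon> = 1") auto
qed

lemma core_F:
  fixes c p l \<sigma> \<epsilon> a :: real
  assumes eps: "\<epsilon> = 1 \<or> \<epsilon> = -1"
    and rel: "l * (p*\<sigma> - (1 - p^2)) = \<epsilon> * c * \<sigma>"
  shows "(l*(1-p^2) + (c*a - l*p)*\<sigma>)^2 - (1-p^2)*(1-a^2)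
          = (1 - \<epsilon>*a) * ((c^2*\<sigma>^2 - (1-p^2)) - \<epsilon>*a*(c^2*\<sigma>^2 + (1-p^2)))"
proof -
  have e: "l*(1-p^2) + (c*a - l*p)*\<sigma> = c*\<sigma>*(a - \<epsilon>)" using rel by (simp add: algebra_simps)
  have e2: "\<epsilon>^2 = 1" using eps by auto
  have "(c*\<sigma>*(a - \<epsilon>))^2 - (1-p^2)*(1-a^2)
     = (1 - \<epsilon>*a) * ((c^2*\<sigma>^2 - (1-p^2)) - \<epsilon>*a*(c^2*\<sigma>^2 + (1-p^2)))"
    using eps by (auto simp: power2_eq_square algebra_simps)
  thus ?thesis using e by simp
qed

lemma core_tau:
  fixes c p \<sigma> :: real
  assumes c: "c > 0" and p: "-1 < p" "p < 1" and s0: "\<sigma> \<noteq> 0"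
    and quad: "c^2*\<sigma>^2 + p*(c^2+1)*\<sigma> - (1 - p^2) = 0"
  shows "c^2*\<sigma>^2 - (1-p^2) = (- sgn \<sigma> * (p * ((c + 1/c)/2) / sqrt (p^2 * ((c + 1/c)/2)^2 + (1-p^2)))) * (c^2*\<sigma>^2 + (1-p^2))"
proof -
  define ch where "ch = (c + 1/c)/2"
  define k where "k = 1 - p^2"
  define D where "D = sqrt (p^2 * ch^2 + k)"
  have k: "k > 0" using p unfolding k_def by (simp add: abs_square_less_1)
  have ch: "ch > 0" using c unfolding ch_def by (simp add: add_pos_pos)
  have c2: "c^2 + 1 = 2*c*ch" using c unfolding ch_def by (simp add: field_simps power2_eq_square)
  have Dpos: "D > 0" unfolding D_def using k by (simp add: add_nonneg_pos)
  have D2: "D^2 = p^2 * ch^2 + k" unfolding D_def using k by simp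
  have N: "c^2*\<sigma>^2 - k = - p*(c^2+1)*\<sigma>" using quad unfolding k_def by (simp add: algebra_simps)
  define M where "M = c^2*\<sigma>^2 + k"
  have Mpos: "M > 0" unfolding M_def using k by (simp add: add_nonneg_pos)
  have "M^2 = (c^2*\<sigma>^2 - k)^2 + 4*c^2*\<sigma>^2*k" unfolding M_def by (simp add: power2_eq_square algebra_simps)
  also have "\<dots> = (p*(c^2+1)*\<sigma>)^2 + 4*c^2*\<sigma>^2*k" using N by (simp add: power2_eq_square)
  also have "\<dots> = (p*(2*c*ch)*\<sigma>)^2 + 4*c^2*\<sigma>^2*k" using c2 by simp
  also have "\<dots> = 4*c^2*\<sigma>^2*(p^2 * ch^2 + k)" by (simp add: power2_eq_square algebra_simps)
  also have "\<dots> = 4*c^2*\<bar>\<sigma>\<bar>^2*D^2" using D2 by simp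
  also have "\<dots> = (2*c*\<bar>\<sigma>\<bar>*D)^2" by (simp add: power_mult_distrib)
  finally have "M^2 = (2*c*\<bar>\<sigma>\<bar>*D)^2" .
  hence M: "M = 2*c*\<bar>\<sigma>\<bar>*D" using Mpos c Dpos
    by (metis abs_of_nonneg abs_of_pos less_imp_le mult_nonneg_nonneg real_sqrt_abs zero_le_numeral abs_ge_zero)
  have "(- sgn \<sigma> * (p * ch / D)) * M = - p * ch * 2 * c * (sgn \<sigma> * \<bar>\<sigma>\<bar>)"
    unfolding M using Dpos by (simp add: field_simps)
  also have "\<dots> = - p * (c^2+1) * \<sigma>"
  proof -
    have sa: "sgn \<sigma> * \<bar>\<sigma>\<bar> = \<sigma>" by (rule sgn_mult_abs)
    show ?thesis unfolding sa c2 by (simp add: algebra_simps)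
  qed
  finally have "(- sgn \<sigma> * (p * ch / D)) * M = c^2*\<sigma>^2 - k" using N by simp
  thus ?thesis unfolding M_def D_def ch_def k_def by simp
qed

lemma core_l:
  fixes c p l \<sigma> \<epsilon> :: real
  assumes c: "c > 0" and eps: "\<epsilon> = 1 \<or> \<epsilon> = -1"
    and rel: "l * (p*\<sigma> - (1 - p^2)) = \<epsilon> * c * \<sigma>"
    and quad: "c^2*\<sigma>^2 + p*(c^2+1)*\<sigma> - (1 - p^2) = 0"
    and k: "1 - p^2 > 0"
  shows "l^2 - 1 = \<epsilon> * l * p * (c - 1/c)"
proof -
  define k where "k = 1 - p^2"
  have e2: "\<epsilon>^2 = 1" using eps by auto
  have rel': "\<sigma> * (l*p - \<epsilon>*c) = l*k" using rel unfolding k_def by (simp add: algebra_simps)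
  have "c^2*(\<sigma>*(l*p - \<epsilon>*c))^2 + p*(c^2+1)*(\<sigma>*(l*p - \<epsilon>*c))*(l*p - \<epsilon>*c) - k*(l*p - \<epsilon>*c)^2
        = (c^2*\<sigma>^2 + p*(c^2+1)*\<sigma> - k) * (l*p - \<epsilon>*c)^2"
    by (simp add: power2_eq_square algebra_simps)
  also have "\<dots> = 0" using quad unfolding k_def by simp
  finally have "c^2*(l*k)^2 + p*(c^2+1)*(l*k)*(l*p - \<epsilon>*c) - k*(l*p - \<epsilon>*c)^2 = 0"
    using rel' by simp
  moreover have "c^2*(l*k)^2 + p*(c^2+1)*(l*k)*(l*p - \<epsilon>*c) - k*(l*p - \<epsilon>*c)^2
       = k * (c^2*(l^2-1) - \<epsilon>*c*p*l*(c^2-1)) + k*c^2*(1 - \<epsilon>^2)"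
    unfolding k_def by (simp add: power2_eq_square algebra_simps)
  ultimately have "k * (c^2*(l^2-1) - \<epsilon>*c*p*l*(c^2-1)) = 0" using e2 by simp
  hence "c^2*(l^2-1) = \<epsilon>*c*p*l*(c^2-1)" using k unfolding k_def by simp
  hence "c * (c*(l^2-1) - \<epsilon>*p*l*(c^2-1)) = 0" by (simp add: power2_eq_square algebra_simps)
  hence h: "c*(l^2-1) = \<epsilon>*p*l*(c^2-1)" using c by simp
  have "l^2 - 1 = (c*(l^2-1))/c" using c by simp
  also have "\<dots> = \<epsilon>*p*l*(c^2-1)/c" using h by simp
  also have "\<dots> = \<epsilon> * l * p * (c - 1/c)" using c by (simp add: field_simps power2_eq_square)
  finally show ?thesis .
qed

lemma core_pos:
  fixes c p y :: real
  assumes c: "c > 0" and p: "-1 < p" "p < 1" and y0: "y \<noteq> 0"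
    and rel: "c * (y^2 - 1) = y * p * (c^2 - 1)"
  shows "c - y*p > 0"
proof -
  define k where "k = 1 - p^2"
  have k: "k > 0" using p unfolding k_def by (simp add: abs_square_less_1)
  define u where "u = c - y*p"
  define v where "v = c*y + p"
  have uv: "u * v = y * c^2 * k"
  proof -
    have "u * v - y * c^2 * k = - p * (c * (y^2 - 1) - y * p * (c^2 - 1))"
      unfolding u_def v_def k_def by (simp add: power2_eq_square algebra_simps)
    thus ?thesis using rel by simp
  qed
  have sv: "c * (y*u + v) = y * (c^2*(2 - p^2) + p^2)"
  proof -
    have "c * (y*u + v) - y * (c^2*(2 - p^2) + p^2) = - p * (c * (y^2 - 1) - y * p * (c^2 - 1))"
      unfolding u_def v_def by (simp add: power2_eq_square algebra_simps)
    thus ?thesis using rel by simp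
  qed
  have P: "c^2*(2 - p^2) + p^2 > 0"
  proof -
    have "p^2 < 1" using p by (simp add: abs_square_less_1)
    hence "2 - p^2 > 0" by simp
    thus ?thesis using c by (simp add: add_pos_nonneg)
  qed
  show ?thesis
  proof (rule ccontr)
    assume "\<not> ?thesis"
    hence u0: "u \<le> 0" unfolding u_def by simp
    show False
    proof (cases "y > 0")
      case True
      have "u * v > 0" using uv True c k by simp
      hence "u < 0 \<and> v < 0" using u0 by (auto simp: zero_less_mult_iff)
      hence "y*u + v < 0" using True by (simp add: add_neg_neg mult_pos_neg)
      moreover have "c * (y*u + v) > 0" using sv True P by simp
      ultimately show False using c by (simp add: zero_less_mult_iff)
    next
      case False
      hence yn: "y < 0" using y0 by simp
      have "u * v < 0" using uv yn c k by (simp add: mult_neg_pos)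
      hence "u < 0 \<and> v > 0" using u0 by (auto simp: mult_less_0_iff)
      hence "y*u + v > 0" using yn by (simp add: add_pos_pos mult_neg_neg)
      moreover have "c * (y*u + v) < 0" using sv yn P by (simp add: mult_neg_pos)
      ultimately show False using c by (simp add: mult_less_0_iff)
    qed
  qed
qed

lemma core_suff:
  fixes c p l \<epsilon> :: real
  assumes c: "c > 0" and p: "-1 < p" "p < 1" and eps: "\<epsilon> = 1 \<or> \<epsilon> = -1" and l: "l \<noteq> 0"
    and lrel: "l^2 - 1 = \<epsilon> * l * p * (c - 1/c)"
  defines "\<sigma> \<equiv> l * (1 - p^2) / (l*p - \<epsilon>*c)"
  shows "l * (p*\<sigma> - (1 - p^2)) = \<epsilon> * c * \<sigma>"
    and "c^2*\<sigma>^2 + p*(c^2+1)*\<sigma> - (1 - p^2) = 0"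
proof -
  define k where "k = 1 - p^2"
  have k: "k > 0" using p unfolding k_def by (simp add: abs_square_less_1)
  have e2: "\<epsilon>^2 = 1" using eps by auto
  have cl: "c * (l^2 - 1) = \<epsilon> * l * p * (c^2 - 1)"
    using lrel c by (simp add: field_simps power2_eq_square)
  have "c * ((\<epsilon>*l)^2 - 1) = (\<epsilon>*l) * p * (c^2 - 1)"
    using cl e2 by (simp add: power_mult_distrib)
  hence "c - (\<epsilon>*l)*p > 0" using core_pos[OF c p, of "\<epsilon>*l"] l eps by auto
  hence d0: "l*p - \<epsilon>*c \<noteq> 0" using eps by auto
  have sd: "\<sigma> * (l*p - \<epsilon>*c) = l*k" unfolding \<sigma>_def k_def using d0 by simp
  show "l * (p*\<sigma> - (1 - p^2)) = \<epsilon> * c * \<sigma>"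
    using sd unfolding k_def by (simp add: algebra_simps)
  have "(c^2*\<sigma>^2 + p*(c^2+1)*\<sigma> - k) * (l*p - \<epsilon>*c)^2
      = c^2*(\<sigma>*(l*p - \<epsilon>*c))^2 + p*(c^2+1)*(\<sigma>*(l*p - \<epsilon>*c))*(l*p - \<epsilon>*c) - k*(l*p - \<epsilon>*c)^2"
    by (simp add: power2_eq_square algebra_simps)
  also have "\<dots> = c^2*(l*k)^2 + p*(c^2+1)*(l*k)*(l*p - \<epsilon>*c) - k*(l*p - \<epsilon>*c)^2"
    using sd by simp
  also have "\<dots> = k * (c^2*(l^2-1) - \<epsilon>*c*p*l*(c^2-1)) + k*c^2*(1 - \<epsilon>^2)"
    unfolding k_def by (simp add: power2_eq_square algebra_simps)
  also have "\<dots> = 0"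
  proof -
    have "c^2*(l^2-1) - \<epsilon>*c*p*l*(c^2-1) = c * (c * (l^2 - 1) - \<epsilon> * l * p * (c^2 - 1))"
      by (simp add: power2_eq_square algebra_simps)
    thus ?thesis using cl e2 by simp
  qed
  finally show "c^2*\<sigma>^2 + p*(c^2+1)*\<sigma> - (1 - p^2) = 0" using d0 unfolding k_def by simp
qed

lemma rhs_char:
  fixes \<gamma> p ap am :: real and q :: complex and z :: complex
  shows "z \<in> sigma_minus \<gamma> p q ap am \<union> sigma_plus \<gamma> p q ap am \<longleftrightarrow>
    (\<exists>l \<epsilon>. z = complex_of_real l \<and> l \<noteq> 0 \<and> (\<epsilon> = 1 \<or> \<epsilon> = -1)
       \<and> l^2 - 2*(\<epsilon>*p * sinh (2*\<gamma>))*l - 1 = 0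
       \<and> \<epsilon>*am < \<epsilon>* sgn l*p_gamma' \<gamma> p q \<and> \<epsilon>* sgn l*p_gamma' \<gamma> p q < \<epsilon>*ap)"
  (is "?L \<longleftrightarrow> ?R")
proof
  define P where "P = p_gamma' \<gamma> p q"
  define x where "x = p * sinh (2*\<gamma>)"
  have mx: "- p * sinh (2*\<gamma>) = - x" unfolding x_def by simp
  assume ?L
  hence "z \<in> sigma_minus \<gamma> p q ap am \<or> z \<in> sigma_plus \<gamma> p q ap am" by blast
  thus ?R
  proof
    assume zm: "z \<in> sigma_minus \<gamma> p q ap am"
    show ?R
    proof (cases "am < - P \<and> - P < ap")
      case True
      hence z: "z = complex_of_real (lam_minus x)" using zm unfolding sigma_minus_def P_def x_def by auto
      show ?R
        apply (rule exI[of _ "lam_minus x"], rule exI[of _ 1])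
        using True z lam_minus_props[of x] unfolding P_def x_def by auto
    next
      case False
      hence c2: "ap < - P \<and> - P < am" and z: "z = complex_of_real (lam_minus (-x))"
        using zm unfolding sigma_minus_def P_def mx by (auto split: if_splits)
      show ?R
        apply (rule exI[of _ "lam_minus (-x)"], rule exI[of _ "-1"])
        using c2 z lam_minus_props[of "-x"] unfolding P_def x_def by auto
    qed
  next
    assume zp: "z \<in> sigma_plus \<gamma> p q ap am"
    show ?R
    proof (cases "am < P \<and> P < ap")
      case True
      hence z: "z = complex_of_real (lam_plus x)" using zp unfolding sigma_plus_def P_def x_def by auto
      show ?R
        apply (rule exI[of _ "lam_plus x"], rule exI[of _ 1])
        using True z lam_plus_props[of x] unfolding P_def x_def by auto
    next
      case False
      hence c2: "ap < P \<and> P < am" and z: "z = complex_of_real (lam_plus (-x))"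
        using zp unfolding sigma_plus_def P_def mx by (auto split: if_splits)
      show ?R
        apply (rule exI[of _ "lam_plus (-x)"], rule exI[of _ "-1"])
        using c2 z lam_plus_props[of "-x"] unfolding P_def x_def by auto
    qed
  qed
next
  define P where "P = p_gamma' \<gamma> p q"
  define x where "x = p * sinh (2*\<gamma>)"
  have mx: "- p * sinh (2*\<gamma>) = - x" unfolding x_def by simp
  assume ?R
  then obtain l \<epsilon> where z: "z = complex_of_real l" and l0: "l \<noteq> 0" and eps: "\<epsilon> = 1 \<or> \<epsilon> = -1"
    and lr: "l^2 - 2*(\<epsilon>*x)*l - 1 = 0"
    and c1: "\<epsilon>*am < \<epsilon>* sgn l*P" and c2: "\<epsilon>* sgn l*P < \<epsilon>*ap"
    unfolding P_def x_def by (auto simp: mult.assoc)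
  show ?L
  proof (cases "l > 0")
    case True
    hence l: "l = lam_plus (\<epsilon>*x)" using lam_root(1)[OF lr] by simp
    show ?L
    proof (cases "\<epsilon> = 1")
      case True
      hence "am < P \<and> P < ap" using c1 c2 \<open>l > 0\<close> by simp
      thus ?L using z l True unfolding sigma_plus_def P_def x_def by auto
    next
      case False
      hence e: "\<epsilon> = -1" using eps by simp
      hence "ap < P \<and> P < am" using c1 c2 \<open>l > 0\<close> by simp
      thus ?L using z l e unfolding sigma_plus_def P_def mx by auto
    qed
  next
    case False
    hence ln: "l < 0" using l0 by simp
    hence l: "l = lam_minus (\<epsilon>*x)" using lam_root(2)[OF lr] by simp
    show ?L
    proof (cases "\<epsilon> = 1")
      case True
      hence "am < - P \<and> - P < ap" using c1 c2 ln by simp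
      thus ?L using z l True unfolding sigma_minus_def P_def x_def by auto
    next
      case False
      hence e: "\<epsilon> = -1" using eps by simp
      hence "ap < - P \<and> - P < am" using c1 c2 ln by simp
      thus ?L using z l e unfolding sigma_minus_def P_def mx by auto
    qed
  qed
qed

locale qw =
  fixes \<gamma> p ap am :: real and q bp bm :: complex
  assumes p_lo: "-1 < p" and p_hi: "p < 1" and pq: "p^2 + (cmod q)^2 = 1"
    and ap_lo: "-1 < ap" and ap_hi: "ap < 1" and am_lo: "-1 < am" and am_hi: "am < 1"
    and abp: "ap^2 + (cmod bp)^2 = 1" and abm: "am^2 + (cmod bm)^2 = 1"
begin

abbreviation "aa \<equiv> two_phase ap am"
abbreviation "bb \<equiv> two_phase bp bm"
definition "cc = exp (2*\<gamma>)"
definition "kk = 1 - p^2"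
definition "C = complex_of_real cc"
definition "C' = complex_of_real (exp (-2*\<gamma>))"
definition "PP = complex_of_real p"
definition "KK = complex_of_real kk"

definition eqs :: "complex \<Rightarrow> (int \<Rightarrow> complex \<times> complex) \<Rightarrow> bool" where
  "eqs z \<Psi> \<longleftrightarrow> (\<forall>x.
     C' * complex_of_real (aa x) * fst (\<Psi> x) + cnj (bb x) * snd (\<Psi> x) = z * (PP * fst (\<Psi> x) + q * snd (\<Psi> (x+1))) \<and>
     bb x * fst (\<Psi> x) - C * complex_of_real (aa x) * snd (\<Psi> x) = z * (cnj q * fst (\<Psi> (x-1)) - PP * snd (\<Psi> x)))"

lemma coin_iff:
  "coin_op \<gamma> aa bb \<Psi> = (\<lambda>x. (z * fst (shift_op p q \<Psi> x), z * snd (shift_op p q \<Psi> x))) \<longleftrightarrow> eqs z \<Psi>"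
  unfolding eqs_def coin_op_def shift_op_def fun_eq_iff prod_eq_iff C_def C'_def PP_def cc_def
  by (simp add: mult.assoc)

lemma walk_iff:
  "walk_op \<gamma> p q aa bb \<Psi> = (\<lambda>x. (z * fst (\<Psi> x), z * snd (\<Psi> x))) \<longleftrightarrow> eqs z \<Psi>"
proof
  assume h: "walk_op \<gamma> p q aa bb \<Psi> = (\<lambda>x. (z * fst (\<Psi> x), z * snd (\<Psi> x)))"
  have "coin_op \<gamma> aa bb \<Psi> = shift_op p q (shift_op p q (coin_op \<gamma> aa bb \<Psi>))"
    using shift_invol[OF pq] by simp
  also have "\<dots> = shift_op p q (\<lambda>x. (z * fst (\<Psi> x), z * snd (\<Psi> x)))"
    using h unfolding walk_op_def by simp
  also have "\<dots> = (\<lambda>x. (z * fst (shift_op p q \<Psi> x), z * snd (shift_op p q \<Psi> x)))"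
    by (rule shift_scale)
  finally show "eqs z \<Psi>" using coin_iff by simp
next
  assume "eqs z \<Psi>"
  hence h: "coin_op \<gamma> aa bb \<Psi> = (\<lambda>x. (z * fst (shift_op p q \<Psi> x), z * snd (shift_op p q \<Psi> x)))"
    using coin_iff by simp
  have "walk_op \<gamma> p q aa bb \<Psi> = shift_op p q (coin_op \<gamma> aa bb \<Psi>)" unfolding walk_op_def by simp
  also have "\<dots> = (\<lambda>x. (z * fst (shift_op p q (shift_op p q \<Psi>) x), z * snd (shift_op p q (shift_op p q \<Psi>) x)))"
    unfolding h by (rule shift_scale)
  also have "\<dots> = (\<lambda>x. (z * fst (\<Psi> x), z * snd (\<Psi> x)))" using shift_invol[OF pq] by simp
  finally show "walk_op \<gamma> p q aa bb \<Psi> = (\<lambda>x. (z * fst (\<Psi> x), z * snd (\<Psi> x)))" .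
qed

lemma cc_pos: "cc > 0" unfolding cc_def by simp
lemma kk_pos: "kk > 0" unfolding kk_def using p_lo p_hi by (simp add: abs_square_less_1)
lemma CC': "C * C' = 1" unfolding C_def C'_def cc_def by (simp add: exp_add[symmetric] flip: of_real_mult)
lemma C_nz: "C \<noteq> 0" unfolding C_def using cc_pos by simp
lemma qq: "q * cnj q = KK"
proof -
  have "(cmod q)^2 = kk" using pq unfolding kk_def by simp
  thus ?thesis using complex_norm_square[of q] unfolding KK_def by simp
qed
lemma q_nz: "q \<noteq> 0" using qq kk_pos unfolding KK_def by auto
lemma cmod_q: "cmod q = sqrt kk" using pq unfolding kk_def by (simp add: real_sqrt_unique[symmetric])

lemma aa_range: "-1 < aa x" "aa x < 1" using ap_lo ap_hi am_lo am_hi unfolding two_phase_def by auto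
lemma bb_norm: "(cmod (bb x))^2 = 1 - (aa x)^2" using abp abm unfolding two_phase_def by auto
lemma bb_cnj: "bb x * cnj (bb x) = 1 - (complex_of_real (aa x))^2"
proof -
  have "bb x * cnj (bb x) = complex_of_real ((cmod (bb x))^2)" by (rule complex_norm_square[symmetric])
  also have "\<dots> = 1 - (complex_of_real (aa x))^2" using bb_norm by simp
  finally show ?thesis .
qed
lemma bb_nz: "bb x \<noteq> 0"
proof -
  have "(aa x)^2 < 1" using aa_range[of x] by (simp add: abs_square_less_1)
  hence "(cmod (bb x))^2 > 0" using bb_norm by simp
  thus ?thesis by auto
qed
lemma cmod_bb: "cmod (bb x) = sqrt (1 - (aa x)^2)" using bb_norm by (simp add: real_sqrt_unique[symmetric])

lemma aa_pos: "x \<ge> 0 \<Longrightarrow> aa x = ap" and aa_neg: "x < 0 \<Longrightarrow> aa x = am"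
  and bb_pos: "x \<ge> 0 \<Longrightarrow> bb x = bp" and bb_neg: "x < 0 \<Longrightarrow> bb x = bm"
  unfolding two_phase_def by auto

end

locale qw_sol = qw +
  fixes z :: complex and f1 f2 :: "int \<Rightarrow> complex"
  assumes E1: "\<And>x. C' * complex_of_real (aa x) * f1 x + cnj (bb x) * f2 x = z * (PP * f1 x + q * f2 (x+1))"
    and E2: "\<And>x. bb x * f1 x - C * complex_of_real (aa x) * f2 x = z * (cnj q * f1 (x-1) - PP * f2 x)"
begin

lemma cbb_nz: "cnj (bb x) \<noteq> 0" using bb_nz by simp
lemma cq_nz: "cnj q \<noteq> 0" using q_nz by simp

lemma zero_z: assumes "z = 0" shows "f1 x = 0 \<and> f2 x = 0"
proof -
  have e1: "C' * complex_of_real (aa x) * f1 x + cnj (bb x) * f2 x = 0" using E1[of x] assms by simp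
  have e2: "bb x * f1 x - C * complex_of_real (aa x) * f2 x = 0" using E2[of x] assms by simp
  have bc: "bb x * cnj (bb x) = 1 - (complex_of_real (aa x))^2" by (rule bb_cnj)
  have "f1 x = C * complex_of_real (aa x) * (C' * complex_of_real (aa x) * f1 x + cnj (bb x) * f2 x)
          + cnj (bb x) * (bb x * f1 x - C * complex_of_real (aa x) * f2 x)"
    using bc CC' by algebra
  hence f10: "f1 x = 0" using e1 e2 by simp
  hence "cnj (bb x) * f2 x = 0" using e1 by simp
  thus ?thesis using f10 cbb_nz by simp
qed

lemma prop_up: assumes "z \<noteq> 0" "f1 x = 0" "f2 (x+1) = 0" shows "f1 (x+1) = 0 \<and> f2 (x+1+1) = 0"
proof -
  have "bb (x+1) * f1 (x+1) = 0" using E2[of "x+1"] assms by simp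
  hence a: "f1 (x+1) = 0" using bb_nz by simp
  have "z * q * f2 (x+1+1) = 0" using E1[of "x+1"] assms a by (simp add: algebra_simps)
  thus ?thesis using a assms(1) q_nz by simp
qed

lemma prop_down: assumes "z \<noteq> 0" "f1 x = 0" "f2 (x+1) = 0" shows "f1 (x-1) = 0 \<and> f2 (x-1+1) = 0"
proof -
  have "cnj (bb x) * f2 x = 0" using E1[of x] assms by simp
  hence a: "f2 x = 0" using cbb_nz by simp
  have "z * cnj q * f1 (x-1) = 0" using E2[of x] assms a by (simp add: algebra_simps)
  thus ?thesis using a assms(1) cq_nz by simp
qed

lemma all_zero: assumes "z \<noteq> 0" "f1 x0 = 0" "f2 (x0+1) = 0" shows "f1 x = 0 \<and> f2 (x+1) = 0"
proof (induction x rule: int_induct[where k = x0])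
  case base thus ?case using assms by simp
next
  case (step1 i) thus ?case using prop_up[OF assms(1)] by blast
next
  case (step2 i) thus ?case using prop_down[OF assms(1)] by blast
qed

lemma nonvanish:
  assumes "z \<noteq> 0" "\<exists>x. f1 x \<noteq> 0 \<or> f2 x \<noteq> 0"
  shows "f1 x \<noteq> 0 \<or> f2 (x+1) \<noteq> 0"
proof (rule ccontr)
  assume "\<not> ?thesis"
  hence z: "\<And>y. f1 y = 0 \<and> f2 (y+1) = 0" using all_zero[OF assms(1)] by blast
  from assms(2) obtain y where "f1 y \<noteq> 0 \<or> f2 y \<noteq> 0" by blast
  moreover have "f2 y = 0" using z[of "y-1"] by simp
  ultimately show False using z[of y] by simp
qed

definition W where "W x = f1 (x-1) * f2 (x+1) - f2 x * f1 x"

lemma I1: "z * cnj q * cnj (bb x) * W x = Qf C C' z PP q (cnj q) (complex_of_real (aa x)) (f1 x) (f2 (x+1))"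
  unfolding W_def by (rule W1[OF E1[of x] E2[of x] bb_cnj CC'])

lemma I2: "z * q * bb (x+1) * W (x+1) = Qf C C' z PP q (cnj q) (complex_of_real (aa (x+1))) (f1 x) (f2 (x+1))"
proof -
  have e2: "bb (x+1) * f1 (x+1) - C * complex_of_real (aa (x+1)) * f2 (x+1) = z * (cnj q * f1 x - PP * f2 (x+1))"
    using E2[of "x+1"] by simp
  have "z * q * bb (x+1) * (f1 x * f2 (x+1+1) - f2 (x+1) * f1 (x+1))
        = Qf C C' z PP q (cnj q) (complex_of_real (aa (x+1))) (f1 x) (f2 (x+1))"
    by (rule W2[OF E1[of "x+1"] e2 bb_cnj CC'])
  moreover have "W (x+1) = f1 x * f2 (x+1+1) - f2 (x+1) * f1 (x+1)" unfolding W_def by simp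
  ultimately show ?thesis by simp
qed

lemma Wstep:
  assumes "z \<noteq> 0" "aa (x+1) = aa x" "bb (x+1) = bb x"
  shows "cmod (W (x+1)) = cmod (W x)"
proof -
  have "z * q * bb x * W (x+1) = z * cnj q * cnj (bb x) * W x"
    using I1[of x] I2[of x] assms by simp
  hence "cmod (z * q * bb x * W (x+1)) = cmod (z * cnj q * cnj (bb x) * W x)" by (rule arg_cong[where f=cmod])
  hence "cmod z * cmod q * cmod (bb x) * cmod (W (x+1)) = cmod z * cmod q * cmod (bb x) * cmod (W x)"
    by (simp add: norm_mult)
  moreover have "cmod z * cmod q * cmod (bb x) \<noteq> 0" using assms(1) q_nz bb_nz by simp
  ultimately show ?thesis by simp
qed

lemma W_pos_const: assumes "z \<noteq> 0" shows "cmod (W (int n)) = cmod (W 0)"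
proof (induction n)
  case 0 thus ?case by simp
next
  case (Suc n)
  have "cmod (W (int n + 1)) = cmod (W (int n))"
    by (rule Wstep[OF assms]) (simp_all add: aa_pos bb_pos)
  hence h: "cmod (W (int n + 1)) = cmod (W 0)" using Suc.IH by simp
  have eq: "int (Suc n) = int n + 1" by simp
  show ?case unfolding eq using h .
qed

lemma W_neg_const: assumes "z \<noteq> 0" shows "cmod (W (-1 - int n)) = cmod (W (-1))"
proof (induction n)
  case 0 thus ?case by simp
next
  case (Suc n)
  have "cmod (W ((-2 - int n) + 1)) = cmod (W (-2 - int n))"
    by (rule Wstep[OF assms]) (simp_all add: aa_neg bb_neg)
  moreover have "(-2 - int n) + 1 = -1 - int n" by simp
  moreover have "-1 - int (Suc n) = -2 - int n" by simp
  ultimately show ?case using Suc by simp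
qed

end

locale qw_dec = qw_sol +
  assumes z_nz: "z \<noteq> 0"
    and nz: "\<And>x. f1 x \<noteq> 0 \<or> f2 (x+1) \<noteq> 0"
    and d1p: "\<And>k. (\<lambda>n. f1 (int n + k)) \<longlonglongrightarrow> 0" and d2p: "\<And>k. (\<lambda>n. f2 (int n + k)) \<longlonglongrightarrow> 0"
    and d1m: "\<And>k. (\<lambda>n. f1 (k - int n)) \<longlonglongrightarrow> 0" and d2m: "\<And>k. (\<lambda>n. f2 (k - int n)) \<longlonglongrightarrow> 0"
begin

lemma W0: "W 0 = 0"
proof -
  have "(\<lambda>n. W (int n)) = (\<lambda>n. f1 (int n + -1) * f2 (int n + 1) - f2 (int n + 0) * f1 (int n + 0))"
    unfolding W_def by simp
  moreover have "(\<lambda>n. f1 (int n + -1) * f2 (int n + 1) - f2 (int n + 0) * f1 (int n + 0)) \<longlonglongrightarrow> 0 * 0 - 0 * 0"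
    by (intro tendsto_intros d1p d2p)
  ultimately have "(\<lambda>n. W (int n)) \<longlonglongrightarrow> 0" by simp
  thus ?thesis using const_norm_zero[of "\<lambda>n. W (int n)"] W_pos_const[OF z_nz] by simp
qed

lemma Wm1: "W (-1) = 0"
proof -
  have e: "\<And>n. -1 - int n - 1 = -2 - int n" "\<And>n. -1 - int n + 1 = 0 - int n" by simp_all
  have "(\<lambda>n. W (-1 - int n)) = (\<lambda>n. f1 (-2 - int n) * f2 (0 - int n) - f2 (-1 - int n) * f1 (-1 - int n))"
    unfolding W_def e ..
  moreover have "(\<lambda>n. f1 (-2 - int n) * f2 (0 - int n) - f2 (-1 - int n) * f1 (-1 - int n)) \<longlonglongrightarrow> 0 * 0 - 0 * 0"
    by (intro tendsto_intros d1m d2m)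
  ultimately have "(\<lambda>n. W (-1 - int n)) \<longlonglongrightarrow> 0" by simp
  thus ?thesis using const_norm_zero[of "\<lambda>n. W (-1 - int n)"] W_neg_const[OF z_nz] by simp
qed

lemma W_zero: "W x = 0"
proof (cases "x \<ge> 0")
  case True
  then obtain n where "x = int n" by (metis nonneg_eq_int)
  thus ?thesis using W_pos_const[OF z_nz, of n] W0 by simp
next
  case False
  hence "x = -1 - int (nat (-1 - x))" by simp
  thus ?thesis using W_neg_const[OF z_nz, of "nat (-1 - x)"] Wm1 by (metis norm_eq_zero)
qed

end

lemma bracket_Qf:
  fixes cc cc' z p q cq a b cb r :: complex
  assumes "b \<noteq> 0" "b * cb = 1 - a^2" "cc * cc' = 1"
  shows "b * ((cc' * a - z * p) * ((z * cq + (cc * a - z * p) * r) / b) + cb * r - z * q * r * ((z * cq + (cc * a - z * p) * r) / b))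
         = Qf cc cc' z p q cq a 1 r"
proof -
  define m where "m = (z * cq + (cc * a - z * p) * r) / b"
  have bm: "b * m = z * cq + (cc * a - z * p) * r" unfolding m_def using assms(1) by simp
  have "b * ((cc' * a - z * p) * m + cb * r - z * q * r * m) = (cc' * a - z * p) * (b * m) + (b * cb) * r - z * q * r * (b * m)"
    by (simp add: algebra_simps)
  also have "\<dots> = Qf cc cc' z p q cq a 1 r" unfolding bm Qf_def power_one mult_1_right using assms(2,3) by algebra
  finally show ?thesis unfolding m_def .
qed

lemma Qf_lin:
  fixes cc cc' z p q cq a r :: complex
  shows "Qf cc cc' z p q cq a 1 r = ((1 + z^2*(p^2 - q*cq))*r + z^2*p*q*r^2 - z^2*cq*p) + a * (z*cq*cc' - z*p*(cc+cc')*r - z*q*cc*r^2)"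
  unfolding Qf_def power_one mult_1_right by algebra

context qw
begin
definition mu where "mu z r a b = (z * cnj q + (C * complex_of_real a - z * PP) * r) / b"
end

context qw_dec
begin

lemma par:
  assumes X0: "f1 (-1) \<noteq> 0"
  shows "f2 (x+1) = (f2 0 / f1 (-1)) * f1 x \<and> f1 x \<noteq> 0"
proof (induction x rule: int_induct[where k = "-1"])
  case base thus ?case using X0 by simp
next
  case (step1 i)
  define r where "r = f2 0 / f1 (-1)"
  have IH: "f2 (i+1) = r * f1 i" "f1 i \<noteq> 0" using step1.IH unfolding r_def by auto
  have "W (i+1) = 0" by (rule W_zero)
  hence "f1 i * f2 (i+1+1) = f2 (i+1) * f1 (i+1)" unfolding W_def by simp
  hence "f1 i * f2 (i+1+1) = f1 i * (r * f1 (i+1))" using IH by (simp add: algebra_simps)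
  hence a: "f2 (i+1+1) = r * f1 (i+1)" using IH(2) by simp
  have "f1 (i+1) \<noteq> 0" using nz[of "i+1"] a by auto
  thus ?case using a unfolding r_def by simp
next
  case (step2 i)
  define r where "r = f2 0 / f1 (-1)"
  have IH: "f2 (i+1) = r * f1 i" "f1 i \<noteq> 0" using step2.IH unfolding r_def by auto
  have "W i = 0" by (rule W_zero)
  hence "f1 (i-1) * f2 (i+1) = f2 i * f1 i" unfolding W_def by simp
  hence "f1 i * (r * f1 (i-1)) = f1 i * f2 i" using IH by (simp add: algebra_simps)
  hence a: "f2 i = r * f1 (i-1)" using IH(2) by simp
  have "f1 (i-1) \<noteq> 0" using nz[of "i-1"] a by auto
  thus ?case using a unfolding r_def by simp
qed

lemma X0_zero_impossible:
  assumes X0: "f1 (-1) = 0"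
  shows False
proof -
  have pz: "f1 x = 0 \<and> f2 (x+1) \<noteq> 0" for x
  proof (induction x rule: int_induct[where k = "-1"])
    case base thus ?case using X0 nz[of "-1"] by simp
  next
    case (step1 i)
    have "W (i+1) = 0" by (rule W_zero)
    hence "f1 i * f2 (i+1+1) = f2 (i+1) * f1 (i+1)" unfolding W_def by simp
    hence a: "f1 (i+1) = 0" using step1.IH by simp
    thus ?case using nz[of "i+1"] by simp
  next
    case (step2 i)
    have "W i = 0" by (rule W_zero)
    hence "f1 (i-1) * f2 (i+1) = f2 i * f1 i" unfolding W_def by simp
    hence a: "f1 (i-1) = 0" using step2.IH by simp
    thus ?case using nz[of "i-1"] by simp
  qed
  have f2nz: "f2 x \<noteq> 0" for x using pz[of "x-1"] by simp
  have caz: "C * complex_of_real (aa x) = z * PP" for x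
  proof -
    have "(C * complex_of_real (aa x) - z * PP) * f2 x = 0"
      using E2[of x] pz[of x] pz[of "x-1"] by (simp add: algebra_simps)
    thus ?thesis using f2nz[of x] by simp
  qed
  have "C * complex_of_real ap = C * complex_of_real am"
    using caz[of 0] caz[of "-1"] by (simp add: aa_pos aa_neg)
  hence apm: "ap = am" using C_nz by simp
  have rec: "f2 (x+1) = (cnj (bb x) / (z * q)) * f2 x" for x
  proof -
    have "cnj (bb x) * f2 x = z * q * f2 (x+1)" using E1[of x] pz[of x] by simp
    thus ?thesis using z_nz q_nz by (simp add: field_simps)
  qed
  have "cmod (cnj bp / (z * q)) < 1"
  proof (rule fwd_ratio[of "\<lambda>n. f2 (int n)"])
    show "f2 (int (Suc n)) = cnj bp / (z * q) * f2 (int n)" for n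
      using rec[of "int n"] by (simp add: bb_pos add.commute)
    show "(\<lambda>n. f2 (int n)) \<longlonglongrightarrow> 0" using d2p[of 0] by simp
    show "f2 (int 0) \<noteq> 0" using f2nz by simp
  qed
  moreover have "cmod (cnj bm / (z * q)) > 1"
  proof (rule bwd_ratio[of "\<lambda>n. f2 (0 - int n)"])
    show "f2 (0 - int n) = cnj bm / (z * q) * f2 (0 - int (Suc n))" for n
      using rec[of "0 - int (Suc n)"] by (simp add: bb_neg)
    show "(\<lambda>n. f2 (0 - int n)) \<longlonglongrightarrow> 0" by (rule d2m)
    show "f2 (0 - int 0) \<noteq> 0" using f2nz by simp
  qed
  moreover have "cmod bp = cmod bm"
  proof -
    have h1: "(cmod bp)^2 = 1 - ap^2" using abp by simp
    have h2: "(cmod bm)^2 = 1 - am^2" using abm by simp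
    have "(cmod bp)^2 = (cmod bm)^2" using h1 h2 apm by simp
    thus ?thesis by (metis norm_ge_zero power2_eq_iff_nonneg)
  qed
  ultimately show False by (simp add: norm_divide)
qed

lemma X0_nonzero_result:
  obtains r where "Qf C C' z PP q (cnj q) (complex_of_real ap) 1 r = 0"
    "Qf C C' z PP q (cnj q) (complex_of_real am) 1 r = 0"
    "cmod (mu z r ap bp) < 1" "cmod (mu z r am bm) > 1" "ap \<noteq> am"
proof -
  have X0: "f1 (-1) \<noteq> 0" using X0_zero_impossible by blast
  define r where "r = f2 0 / f1 (-1)"
  have pr: "f2 (x+1) = r * f1 x" "f1 x \<noteq> 0" for x using par[OF X0, of x] unfolding r_def by auto
  have rec: "f1 x = mu z r (aa x) (bb x) * f1 (x-1)" for x
  proof -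
    have "bb x * f1 x = (z * cnj q + (C * complex_of_real (aa x) - z * PP) * r) * f1 (x-1)"
      using E2[of x] pr(1)[of "x-1"] by (simp add: algebra_simps)
    thus ?thesis unfolding mu_def using bb_nz[of x] by (simp add: field_simps)
  qed
  have br: "(C' * complex_of_real (aa x) - z * PP) * mu z r (aa x) (bb x) + cnj (bb x) * r - z * q * r * mu z r (aa x) (bb x) = 0" for x
  proof -
    have "f1 (x-1) * ((C' * complex_of_real (aa x) - z * PP) * mu z r (aa x) (bb x) + cnj (bb x) * r - z * q * r * mu z r (aa x) (bb x))
        = C' * complex_of_real (aa x) * f1 x + cnj (bb x) * f2 x - z * (PP * f1 x + q * f2 (x+1))"
      using rec[of x] pr(1)[of x] pr(1)[of "x-1"] by (simp add: algebra_simps)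
    also have "\<dots> = 0" using E1[of x] by simp
    finally show ?thesis using pr(2)[of "x-1"] by simp
  qed
  have Q: "Qf C C' z PP q (cnj q) (complex_of_real (aa x)) 1 r = 0" for x
  proof -
    have "Qf C C' z PP q (cnj q) (complex_of_real (aa x)) 1 r
          = bb x * ((C' * complex_of_real (aa x) - z * PP) * mu z r (aa x) (bb x) + cnj (bb x) * r - z * q * r * mu z r (aa x) (bb x))"
      unfolding mu_def by (rule bracket_Qf[symmetric, OF bb_nz bb_cnj CC'])
    thus ?thesis using br[of x] by simp
  qed
  have m1: "cmod (mu z r ap bp) < 1"
  proof (rule fwd_ratio[of "\<lambda>n. f1 (int n - 1)"])
    show "f1 (int (Suc n) - 1) = mu z r ap bp * f1 (int n - 1)" for n
      using rec[of "int n"] by (simp add: aa_pos bb_pos)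
    show "(\<lambda>n. f1 (int n - 1)) \<longlonglongrightarrow> 0" using d1p[of "-1"] by simp
    show "f1 (int 0 - 1) \<noteq> 0" using X0 by simp
  qed
  have m2: "cmod (mu z r am bm) > 1"
  proof (rule bwd_ratio[of "\<lambda>n. f1 (-1 - int n)"])
    show "f1 (-1 - int n) = mu z r am bm * f1 (-1 - int (Suc n))" for n
      using rec[of "-1 - int n"] by (simp add: aa_neg bb_neg algebra_simps)
    show "(\<lambda>n. f1 (-1 - int n)) \<longlonglongrightarrow> 0" by (rule d1m)
    show "f1 (-1 - int 0) \<noteq> 0" using X0 by simp
  qed
  have "ap \<noteq> am"
  proof
    assume apm: "ap = am"
    have "cmod bp = cmod bm"
    proof -
      have h1: "(cmod bp)^2 = 1 - ap^2" using abp by simp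
      have h2: "(cmod bm)^2 = 1 - am^2" using abm by simp
      have "(cmod bp)^2 = (cmod bm)^2" using h1 h2 apm by simp
      thus ?thesis by (metis norm_ge_zero power2_eq_iff_nonneg)
    qed
    hence "cmod (mu z r ap bp) = cmod (mu z r am bm)" unfolding mu_def using apm by (simp add: norm_divide)
    thus False using m1 m2 by simp
  qed
  show ?thesis
    apply (rule that[of r])
    using Q[of 0] Q[of "-1"] m1 m2 \<open>ap \<noteq> am\<close> by (simp_all add: aa_pos aa_neg)
qed

end

lemma real_root:
  fixes s :: complex and \<alpha> \<beta> g :: real
  assumes a: "\<alpha> \<noteq> 0" and eq: "complex_of_real \<alpha> * s^2 + complex_of_real \<beta> * s + complex_of_real g = 0"
    and d: "\<beta>^2 - 4*\<alpha>*g \<ge> 0"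
  shows "\<exists>\<sigma>. s = complex_of_real \<sigma>"
proof -
  define w where "w = 2 * complex_of_real \<alpha> * s + complex_of_real \<beta>"
  define sq where "sq = sqrt (\<beta>^2 - 4*\<alpha>*g)"
  have sq2: "sq^2 = \<beta>^2 - 4*\<alpha>*g" unfolding sq_def using d by simp
  have ofr: "complex_of_real (\<beta>^2 - 4*\<alpha>*g) = (complex_of_real \<beta>)^2 - 4 * complex_of_real \<alpha> * complex_of_real g" by simp
  have "w^2 = complex_of_real (\<beta>^2 - 4*\<alpha>*g)" unfolding ofr w_def using eq by algebra
  hence "w^2 = (complex_of_real sq)^2" using sq2 by (metis of_real_power)
  hence "(w - complex_of_real sq) * (w + complex_of_real sq) = 0" by (simp add: power2_eq_square algebra_simps)
  hence "w = complex_of_real sq \<or> w = complex_of_real (- sq)"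
    by (metis eq_neg_iff_add_eq_0 eq_iff_diff_eq_0 mult_eq_0_iff of_real_minus)
  then obtain t where t: "w = complex_of_real t" by blast
  have "s = (w - complex_of_real \<beta>) / (2 * complex_of_real \<alpha>)" unfolding w_def using a by simp
  also have "\<dots> = complex_of_real ((t - \<beta>) / (2*\<alpha>))" unfolding t by simp
  finally show ?thesis by blast
qed

lemma quad_neg:
  fixes c p \<sigma> :: real
  assumes c: "c > 0" and p: "-1 < p" "p < 1"
    and quad: "c^2*\<sigma>^2 + p*(c^2+1)*\<sigma> - (1 - p^2) = 0"
  shows "p*\<sigma> - (1 - p^2) < 0"
proof (rule ccontr)
  have k: "1 - p^2 > 0" using p by (simp add: abs_square_less_1)
  assume "\<not> ?thesis"
  hence ge: "p*\<sigma> \<ge> 1 - p^2" by simp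
  have "p*(c^2+1)*\<sigma> = (c^2+1)*(p*\<sigma>)" by simp
  also have "\<dots> \<ge> (c^2+1)*(1-p^2)" using ge by (intro mult_left_mono) auto
  finally have "p*(c^2+1)*\<sigma> \<ge> (c^2+1)*(1-p^2)" .
  moreover have "c^2*\<sigma>^2 \<ge> 0" by simp
  moreover have "c^2 * (1-p^2) > 0" using k c by simp
  moreover have "(c^2+1)*(1-p^2) = c^2*(1-p^2) + (1-p^2)" by (simp add: algebra_simps)
  ultimately have "c^2*\<sigma>^2 + p*(c^2+1)*\<sigma> - (1 - p^2) > 0" by linarith
  thus False using quad by simp
qed

lemma key_alg:
  fixes z C PP KK s :: complex
  assumes "C^2 * s^2 + PP*(C^2+1) * s - KK = 0" "(1 + z^2*(PP^2 - KK)) * s + z^2*PP * s^2 - z^2*KK*PP = 0"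
  shows "(z*(PP * s - KK) - C * s) * (z*(PP * s - KK) + C * s) = 0"
proof -
  have "PP * s - KK - ((- (C^2)) * s * (s+PP)) = C^2 * s^2 + PP*(C^2+1) * s - KK"
    by (simp add: algebra_simps power2_eq_square)
  hence "PP * s - KK - ((- (C^2)) * s * (s+PP)) = 0" unfolding assms(1) .
  hence a: "PP * s - KK = (- (C^2)) * s * (s+PP)" by (simp only: right_minus_eq)
  have "z^2*(PP * s - KK)*(s+PP) + s = (1 + z^2*(PP^2 - KK)) * s + z^2*PP * s^2 - z^2*KK*PP"
    by (simp add: algebra_simps power2_eq_square)
  hence "z^2*(PP * s - KK)*(s+PP) + s = 0" unfolding assms(2) .
  hence b: "z^2*(PP * s - KK)*(s+PP) = - s" by (simp only: eq_neg_iff_add_eq_0)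
  have "(z*(PP * s - KK) - C * s) * (z*(PP * s - KK) + C * s) = (z^2*(PP * s - KK)*(s+PP)) * ((- (C^2)) * s) - C^2 * s^2"
  proof -
    have "(z*(PP * s - KK) - C * s) * (z*(PP * s - KK) + C * s) = z^2*(PP * s - KK)*(PP * s - KK) - C^2 * s^2"
      by (simp add: algebra_simps power2_eq_square)
    also have "\<dots> = z^2*(PP * s - KK)*((- (C^2)) * s * (s+PP)) - C^2 * s^2" by (subst (2) a) (rule refl)
    also have "\<dots> = (z^2*(PP * s - KK)*(s+PP)) * ((- (C^2)) * s) - C^2 * s^2" by (simp add: algebra_simps)
    finally show ?thesis .
  qed
  also have "\<dots> = 0" unfolding b by (simp add: power2_eq_square)
  finally show ?thesis .
qed

context qw
begin

lemma em: "exp (-(2*\<gamma>)) = 1/cc"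
  unfolding cc_def by (simp add: exp_minus inverse_eq_divide)
lemma ch_eq: "cosh (2*\<gamma>) = (cc + 1/cc)/2"
  unfolding cosh_field_def em by (simp only: cc_def)
lemma sh_eq: "sinh (2*\<gamma>) = (cc - 1/cc)/2"
  unfolding sinh_field_def em by (simp only: cc_def)

lemma pg_eq: "p_gamma' \<gamma> p q = p * ((cc + 1/cc)/2) / sqrt (p^2 * ((cc + 1/cc)/2)^2 + (1-p^2))"
proof -
  define ch where "ch = cosh (2*\<gamma>)"
  have ch: "ch > 0" unfolding ch_def by simp
  have q2: "(cmod q)^2 = 1 - p^2" using pq by simp
  have "p^2 + (cmod q)^2 / ch^2 = (p^2 * ch^2 + (1-p^2)) / ch^2" using ch q2 by (simp add: field_simps)
  hence "sqrt (p^2 + (cmod q)^2 / ch^2) = sqrt (p^2 * ch^2 + (1-p^2)) / ch" using ch by (simp add: real_sqrt_divide)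
  hence "p_gamma' \<gamma> p q = p / (sqrt (p^2 * ch^2 + (1-p^2)) / ch)" unfolding p_gamma'_def ch_def by simp
  also have "\<dots> = p * ch / sqrt (p^2 * ch^2 + (1-p^2))" using ch by simp
  finally show ?thesis unfolding ch_def ch_eq .
qed

lemma sinh_rel: "l^2 - 2*(\<epsilon>*p * sinh (2*\<gamma>))*l - 1 = 0 \<longleftrightarrow> l^2 - 1 = \<epsilon> * l * p * (cc - 1/cc)"
proof -
  define t where "t = cc - 1/cc"
  have "2*(\<epsilon>*p*(t/2))*l = \<epsilon> * l * p * t" by simp
  thus ?thesis unfolding sh_eq t_def[symmetric] apply (intro iffI) by linarith+
qed

lemma nec_alg:
  assumes z: "z \<noteq> 0"
    and L: "z*cnj q*C' - z*PP*(C+C')*r - z*q*C*r^2 = 0"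
    and Q0: "(1 + z^2*(PP^2 - q*cnj q))*r + z^2*PP*q*r^2 - z^2*cnj q*PP = 0"
  shows "\<exists>\<sigma> l \<epsilon>. r = complex_of_real \<sigma> / q \<and> z = complex_of_real l \<and> l \<noteq> 0 \<and> (\<epsilon> = 1 \<or> \<epsilon> = -1)
           \<and> l * (p*\<sigma> - (1 - p^2)) = \<epsilon> * cc * \<sigma> \<and> cc^2*\<sigma>^2 + p*(cc^2+1)*\<sigma> - (1 - p^2) = 0"
proof -
  define s where "s = q * r"
  have L': "cnj q*C' - PP*(C+C')*r - q*C*r^2 = 0"
  proof -
    have "z * (cnj q*C' - PP*(C+C')*r - q*C*r^2) = 0" using L by (simp add: algebra_simps)
    thus ?thesis using z by simp
  qed
  have qC: "q * C * (cnj q*C' - PP*(C+C')*r - q*C*r^2) = KK - PP*(C^2+1)* s - C^2* s^2"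
  proof -
    have "q * C * (cnj q*C' - PP*(C+C')*r - q*C*r^2) = (q * cnj q) * (C * C') - PP*(C^2 + C*C')*(q*r) - C^2*(q*r)^2"
      by (simp add: power2_eq_square algebra_simps)
    thus ?thesis unfolding s_def qq CC' by simp
  qed
  have qs: "complex_of_real (cc^2) * s^2 + complex_of_real (p*(cc^2+1)) * s + complex_of_real (-kk) = 0"
  proof -
    have "KK - PP*(C^2+1)* s - C^2* s^2 = 0" using qC L' by simp
    thus ?thesis unfolding KK_def PP_def C_def by (simp add: algebra_simps)
  qed
  have "\<exists>\<sigma>. s = complex_of_real \<sigma>"
  proof (rule real_root[OF _ qs])
    show "cc^2 \<noteq> 0" using cc_pos by simp
    show "(p*(cc^2+1))^2 - 4*cc^2*(-kk) \<ge> 0" using kk_pos by (simp add: add_nonneg_nonneg)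
  qed
  then obtain \<sigma> where s\<sigma>: "s = complex_of_real \<sigma>" by blast
  have quad: "cc^2*\<sigma>^2 + p*(cc^2+1)*\<sigma> - (1 - p^2) = 0"
  proof -
    have "complex_of_real (cc^2*\<sigma>^2 + p*(cc^2+1)*\<sigma> - kk) = 0" using qs unfolding s\<sigma> by (simp add: algebra_simps)
    thus ?thesis unfolding kk_def by (simp only: of_real_eq_0_iff)
  qed
  have Q0q: "(1 + z^2*(PP^2 - KK))* s + z^2*PP* s^2 - z^2*KK*PP = 0"
  proof -
    have "q * ((1 + z^2*(PP^2 - q*cnj q))*r + z^2*PP*q*r^2 - z^2*cnj q*PP) = (1 + z^2*(PP^2 - KK))* s + z^2*PP* s^2 - z^2*KK*PP"
      unfolding s_def qq[symmetric] by (simp add: power2_eq_square algebra_simps)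
    thus ?thesis using Q0 by simp
  qed
  have z0: "KK - PP*(C^2+1)* s - C^2* s^2 = 0" using qC L' by simp
  have quadC: "C^2* s^2 + PP*(C^2+1)* s - KK = 0"
  proof -
    have "C^2* s^2 + PP*(C^2+1)* s - KK = -(KK - PP*(C^2+1)* s - C^2* s^2)" by (simp add: algebra_simps)
    thus ?thesis using z0 by simp
  qed
  have key: "(z*(PP* s - KK) - C* s) * (z*(PP* s - KK) + C* s) = 0"
    by (rule key_alg[OF quadC Q0q])
  have neg: "p*\<sigma> - (1 - p^2) < 0" by (rule quad_neg[OF cc_pos p_lo p_hi quad])
  have PK: "PP* s - KK = complex_of_real (p*\<sigma> - (1 - p^2))" unfolding PP_def KK_def kk_def s\<sigma> by simp
  have PKnz: "complex_of_real (p*\<sigma> - (1 - p^2)) \<noteq> 0"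
  proof -
    have "p*\<sigma> - (1 - p^2) \<noteq> 0" using neg by simp
    thus ?thesis by (metis of_real_eq_0_iff)
  qed
  have A: "z * (PP* s - KK) = z * complex_of_real (p*\<sigma> - (1 - p^2))" using PK by simp
  have B: "C* s = complex_of_real (cc*\<sigma>)" unfolding C_def s\<sigma> by simp
  have "\<exists>\<epsilon>. (\<epsilon> = 1 \<or> \<epsilon> = -1) \<and> z * complex_of_real (p*\<sigma> - (1 - p^2)) = complex_of_real (\<epsilon> * cc * \<sigma>)"
  proof (cases "z * (PP* s - KK) = C* s")
    case True
    hence h: "z * complex_of_real (p*\<sigma> - (1 - p^2)) = complex_of_real (1 * cc * \<sigma>)" using A B by simp
    show ?thesis by (rule exI[of _ 1]) (simp only: h refl simp_thms)
  next
    case False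
    hence "z * (PP* s - KK) = - (C* s)" using key by (metis eq_iff_diff_eq_0 eq_neg_iff_add_eq_0 mult_eq_0_iff)
    hence h: "z * complex_of_real (p*\<sigma> - (1 - p^2)) = complex_of_real ((-1) * cc * \<sigma>)" using A B by simp
    show ?thesis by (rule exI[of _ "-1"]) (simp only: h refl simp_thms)
  qed
  then obtain \<epsilon> where epsze: "(\<epsilon> = 1 \<or> \<epsilon> = -1) \<and> z * complex_of_real (p*\<sigma> - (1 - p^2)) = complex_of_real (\<epsilon> * cc * \<sigma>)"
    by (elim exE)
  have eps: "\<epsilon> = 1 \<or> \<epsilon> = -1" using epsze by (elim conjE)
  have ze: "z * complex_of_real (p*\<sigma> - (1 - p^2)) = complex_of_real (\<epsilon> * cc * \<sigma>)" using epsze by (elim conjE)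
  define l where "l = \<epsilon> * cc * \<sigma> / (p*\<sigma> - (1 - p^2))"
  have "z = z * complex_of_real (p*\<sigma> - (1 - p^2)) / complex_of_real (p*\<sigma> - (1 - p^2))"
    by (rule nonzero_mult_div_cancel_right[OF PKnz, symmetric])
  also have "\<dots> = complex_of_real (\<epsilon> * cc * \<sigma>) / complex_of_real (p*\<sigma> - (1 - p^2))" unfolding ze ..
  also have "\<dots> = complex_of_real l" unfolding l_def of_real_divide ..
  finally have zl: "z = complex_of_real l" .
  have l0: "l \<noteq> 0" using zl z by auto
  have rel: "l * (p*\<sigma> - (1 - p^2)) = \<epsilon> * cc * \<sigma>" unfolding l_def using neg by simp
  have rs: "r = complex_of_real \<sigma> / q" using s\<sigma> q_nz unfolding s_def by (simp add: field_simps)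
  show ?thesis
    apply (rule exI[of _ \<sigma>], rule exI[of _ l], rule exI[of _ \<epsilon>])
    using rs zl l0 eps rel quad by (intro conjI) assumption+
qed

lemma mu_mod:
  assumes zl: "z = complex_of_real l" and rs: "r = complex_of_real \<sigma> / q"
    and a: "-1 < a" "a < 1" and b: "(cmod b)^2 = 1 - a^2"
  shows "cmod (mu z r a b) = sqrt ((l*(1-p^2) + (cc*a - l*p)*\<sigma>)^2) / sqrt ((1-p^2)*(1-a^2))"
proof -
  define E where "E = l*(1-p^2) + (cc*a - l*p)*\<sigma>"
  have "q * (z * cnj q + (C * complex_of_real a - z * PP) * r) = z * (q * cnj q) + (C * complex_of_real a - z * PP) * complex_of_real \<sigma>"
    unfolding rs using q_nz by (simp add: field_simps)
  also have "\<dots> = complex_of_real E" unfolding qq zl KK_def kk_def C_def PP_def E_def by (simp add: algebra_simps)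
  finally have h: "q * (z * cnj q + (C * complex_of_real a - z * PP) * r) = complex_of_real E" .
  have X: "z * cnj q + (C * complex_of_real a - z * PP) * r = complex_of_real E / q"
  proof -
    have "z * cnj q + (C * complex_of_real a - z * PP) * r = q * (z * cnj q + (C * complex_of_real a - z * PP) * r) / q"
      by (rule nonzero_mult_div_cancel_left[OF q_nz, symmetric])
    also have "\<dots> = complex_of_real E / q" unfolding h ..
    finally show ?thesis .
  qed
  have "mu z r a b = complex_of_real E / (q * b)" unfolding mu_def X by (rule divide_divide_eq_left)
  hence "cmod (mu z r a b) = \<bar>E\<bar> / (cmod q * cmod b)" by (simp add: norm_divide norm_mult)
  moreover have "cmod q = sqrt (1-p^2)" using cmod_q unfolding kk_def .
  moreover have "cmod b = sqrt (1 - a^2)" using b by (simp add: real_sqrt_unique[symmetric])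
  ultimately show ?thesis unfolding E_def by (simp add: real_sqrt_mult)
qed

lemma mu_lt_iff:
  assumes "z = complex_of_real l" "r = complex_of_real \<sigma> / q" "-1 < a" "a < 1" "(cmod b)^2 = 1 - a^2"
  shows "cmod (mu z r a b) < 1 \<longleftrightarrow> (l*(1-p^2) + (cc*a - l*p)*\<sigma>)^2 < (1-p^2)*(1-a^2)"
    and "cmod (mu z r a b) > 1 \<longleftrightarrow> (l*(1-p^2) + (cc*a - l*p)*\<sigma>)^2 > (1-p^2)*(1-a^2)"
proof -
  have pos: "(1-p^2)*(1-a^2) > 0" using kk_pos assms(3,4) unfolding kk_def by (simp add: abs_square_less_1)
  hence sp: "sqrt ((1-p^2)*(1-a^2)) > 0" by simp
  show "cmod (mu z r a b) < 1 \<longleftrightarrow> (l*(1-p^2) + (cc*a - l*p)*\<sigma>)^2 < (1-p^2)*(1-a^2)"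
    unfolding mu_mod[OF assms] divide_less_eq_1_pos[OF sp] real_sqrt_less_iff ..
  show "cmod (mu z r a b) > 1 \<longleftrightarrow> (l*(1-p^2) + (cc*a - l*p)*\<sigma>)^2 > (1-p^2)*(1-a^2)"
    unfolding mu_mod[OF assms] less_divide_eq_1_pos[OF sp] real_sqrt_less_iff ..
qed

lemma tau_iff:
  assumes l0: "l \<noteq> 0" and eps: "\<epsilon> = 1 \<or> \<epsilon> = -1"
    and rel: "l * (p*\<sigma> - (1 - p^2)) = \<epsilon> * cc * \<sigma>"
    and quad: "cc^2*\<sigma>^2 + p*(cc^2+1)*\<sigma> - (1 - p^2) = 0"
    and a: "-1 < a" "a < 1"
  shows "(l*(1-p^2) + (cc*a - l*p)*\<sigma>)^2 < (1-p^2)*(1-a^2) \<longleftrightarrow> \<epsilon>*a > \<epsilon> * sgn l * p_gamma' \<gamma> p q"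
    and "(l*(1-p^2) + (cc*a - l*p)*\<sigma>)^2 > (1-p^2)*(1-a^2) \<longleftrightarrow> \<epsilon>*a < \<epsilon> * sgn l * p_gamma' \<gamma> p q"
proof -
  have F: "(l*(1-p^2) + (cc*a - l*p)*\<sigma>)^2 - (1-p^2)*(1-a^2)
          = (1 - \<epsilon>*a) * ((cc^2*\<sigma>^2 - (1-p^2)) - \<epsilon>*a*(cc^2*\<sigma>^2 + (1-p^2)))"
    by (rule core_F[OF eps rel])
  have sg: "\<sigma> \<noteq> 0" "sgn \<sigma> = - \<epsilon> * sgn l"
    using core_sign[OF cc_pos p_lo p_hi eps l0 rel quad] by auto
  have N: "cc^2*\<sigma>^2 - (1-p^2) = (\<epsilon> * sgn l * p_gamma' \<gamma> p q) * (cc^2*\<sigma>^2 + (1-p^2))"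
    using core_tau[OF cc_pos p_lo p_hi sg(1) quad] unfolding pg_eq sg(2) by simp
  have M: "cc^2*\<sigma>^2 + (1-p^2) > 0" using kk_pos unfolding kk_def by (simp add: add_nonneg_pos)
  have ea: "1 - \<epsilon>*a > 0" using eps a by auto
  define t where "t = \<epsilon> * sgn l * p_gamma' \<gamma> p q"
  define M' where "M' = cc^2*\<sigma>^2 + (1-p^2)"
  have F': "(l*(1-p^2) + (cc*a - l*p)*\<sigma>)^2 - (1-p^2)*(1-a^2) = (1 - \<epsilon>*a) * ((t - \<epsilon>*a) * M')"
    unfolding F N t_def M'_def by (simp add: algebra_simps)
  have M'p: "M' > 0" unfolding M'_def using M .
  show "(l*(1-p^2) + (cc*a - l*p)*\<sigma>)^2 < (1-p^2)*(1-a^2) \<longleftrightarrow> \<epsilon>*a > \<epsilon> * sgn l * p_gamma' \<gamma> p q"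
  proof -
    have "(l*(1-p^2) + (cc*a - l*p)*\<sigma>)^2 < (1-p^2)*(1-a^2) \<longleftrightarrow> (1 - \<epsilon>*a) * ((t - \<epsilon>*a) * M') < 0"
      using F' by linarith
    also have "\<dots> \<longleftrightarrow> t - \<epsilon>*a < 0" using ea M'p by (simp add: mult_less_0_iff)
    finally show ?thesis unfolding t_def by linarith
  qed
  show "(l*(1-p^2) + (cc*a - l*p)*\<sigma>)^2 > (1-p^2)*(1-a^2) \<longleftrightarrow> \<epsilon>*a < \<epsilon> * sgn l * p_gamma' \<gamma> p q"
  proof -
    have "(l*(1-p^2) + (cc*a - l*p)*\<sigma>)^2 > (1-p^2)*(1-a^2) \<longleftrightarrow> (1 - \<epsilon>*a) * ((t - \<epsilon>*a) * M') > 0"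
      using F' by linarith
    also have "\<dots> \<longleftrightarrow> t - \<epsilon>*a > 0" using ea M'p by (simp add: zero_less_mult_iff)
    finally show ?thesis unfolding t_def by linarith
  qed
qed

end

lemma geom_int_summable:
  fixes \<rho>1 \<rho>2 :: real
  assumes "0 \<le> \<rho>1" "\<rho>1 < 1" "0 \<le> \<rho>2" "\<rho>2 < 1"
  shows "(\<lambda>x::int. if 0 \<le> x then \<rho>1 ^ nat x else \<rho>2 ^ nat (-x)) summable_on UNIV"
proof -
  define G where "G = (\<lambda>x::int. if 0 \<le> x then \<rho>1 ^ nat x else \<rho>2 ^ nat (-x))"
  define h where "h = (\<lambda>n::nat. - int n - 1)"
  have s1: "G summable_on range int"
  proof -
    have "summable (\<lambda>n. \<rho>1 ^ n)" using assms by (simp add: summable_geometric)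
    hence "(\<lambda>n. \<rho>1 ^ n) summable_on UNIV"
      by (subst summable_on_UNIV_nonneg_real_iff) (use assms in auto)
    moreover have "(G \<circ> int) = (\<lambda>n. \<rho>1 ^ n)" unfolding G_def by (auto simp: fun_eq_iff)
    ultimately have "(G \<circ> int) summable_on UNIV" by simp
    thus ?thesis by (subst summable_on_reindex) auto
  qed
  have s2: "G summable_on range h"
  proof -
    have "summable (\<lambda>n. \<rho>2 * \<rho>2 ^ n)" using assms by (intro summable_mult summable_geometric) simp
    hence "(\<lambda>n. \<rho>2 * \<rho>2 ^ n) summable_on UNIV"
      by (subst summable_on_UNIV_nonneg_real_iff) (use assms in auto)
    moreover have "(G \<circ> h) = (\<lambda>n. \<rho>2 * \<rho>2 ^ n)" unfolding G_def h_def
      by (auto simp: fun_eq_iff nat_add_distrib)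
    ultimately have "(G \<circ> h) summable_on UNIV" by simp
    moreover have "inj h" unfolding h_def by (auto simp: inj_def)
    ultimately show ?thesis by (subst summable_on_reindex) auto
  qed
  have U: "range int \<union> range h = UNIV"
  proof -
    have "x \<in> range int \<union> range h" for x :: int
    proof (cases "0 \<le> x")
      case True thus ?thesis by (metis UnI1 nonneg_int_cases rangeI)
    next
      case False
      hence "x = h (nat (-x-1))" unfolding h_def by simp
      thus ?thesis by blast
    qed
    thus ?thesis by blast
  qed
  have "G summable_on (range int \<union> range h)" by (rule summable_on_union[OF s1 s2])
  thus ?thesis unfolding U G_def .
qed

lemma real_Q0:
  fixes c p l \<sigma> \<epsilon> :: real
  assumes c: "c > 0" and p: "-1 < p" "p < 1" and eps: "\<epsilon> = 1 \<or> \<epsilon> = -1"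
    and rel: "l * (p*\<sigma> - (1 - p^2)) = \<epsilon> * c * \<sigma>"
    and quad: "c^2*\<sigma>^2 + p*(c^2+1)*\<sigma> - (1 - p^2) = 0"
  shows "l^2 * (p*\<sigma> - (1 - p^2)) * (\<sigma> + p) + \<sigma> = 0"
proof -
  have neg: "p*\<sigma> - (1 - p^2) < 0" by (rule quad_neg[OF c p quad])
  have e2: "\<epsilon>^2 = 1" using eps by auto
  have "(p*\<sigma> - (1 - p^2)) * (l^2 * (p*\<sigma> - (1 - p^2)) * (\<sigma> + p) + \<sigma>)
        = (l * (p*\<sigma> - (1 - p^2)))^2 * (\<sigma> + p) + \<sigma> * (p*\<sigma> - (1 - p^2))"
    by (simp add: power2_eq_square algebra_simps)
  also have "\<dots> = \<epsilon>^2 * c^2 * \<sigma>^2 * (\<sigma> + p) + \<sigma> * (p*\<sigma> - (1 - p^2))" unfolding rel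
    by (simp add: power2_eq_square algebra_simps)
  also have "\<dots> = \<sigma> * (c^2*\<sigma>^2 + p*(c^2+1)*\<sigma> - (1 - p^2))" unfolding e2
    by (simp add: power2_eq_square algebra_simps)
  also have "\<dots> = 0" unfolding quad by simp
  finally show ?thesis using neg by simp
qed

context qw
begin

lemma nec:
  assumes ell: "\<Psi> \<in> ell2Z2" and nz0: "\<Psi> \<noteq> (\<lambda>_. (0, 0))" and eq: "eqs z \<Psi>"
  shows "z \<in> sigma_minus \<gamma> p q ap am \<union> sigma_plus \<gamma> p q ap am"
proof -
  define f1 where "f1 = (\<lambda>x. fst (\<Psi> x))"
  define f2 where "f2 = (\<lambda>x. snd (\<Psi> x))"
  interpret S: qw_sol \<gamma> p ap am q bp bm z f1 f2
    by (rule qw_sol.intro[OF qw_axioms], unfold_locales) (use eq in \<open>auto simp: eqs_def f1_def f2_def\<close>)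
  have ex: "\<exists>x. f1 x \<noteq> 0 \<or> f2 x \<noteq> 0"
  proof (rule ccontr)
    assume "\<not> ?thesis"
    hence "\<Psi> = (\<lambda>_. (0, 0))" unfolding f1_def f2_def by (auto simp: fun_eq_iff prod_eq_iff)
    thus False using nz0 by simp
  qed
  have z0: "z \<noteq> 0"
  proof
    assume "z = 0"
    hence "f1 x = 0 \<and> f2 x = 0" for x using S.zero_z by blast
    thus False using ex by blast
  qed
  have injp: "inj (\<lambda>n::nat. int n + k)" for k :: int by (auto simp: inj_def)
  have injm: "inj (\<lambda>n::nat. k - int n)" for k :: int by (auto simp: inj_def)
  interpret D: qw_dec \<gamma> p ap am q bp bm z f1 f2
  proof (rule qw_dec.intro[OF S.qw_sol_axioms], unfold_locales)
    show "z \<noteq> 0" by (rule z0)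
    show "f1 x \<noteq> 0 \<or> f2 (x+1) \<noteq> 0" for x by (rule S.nonvanish[OF z0 ex])
    show "(\<lambda>n. f1 (int n + k)) \<longlonglongrightarrow> 0" for k unfolding f1_def by (rule ell2_decay(1)[OF ell injp])
    show "(\<lambda>n. f2 (int n + k)) \<longlonglongrightarrow> 0" for k unfolding f2_def by (rule ell2_decay(2)[OF ell injp])
    show "(\<lambda>n. f1 (k - int n)) \<longlonglongrightarrow> 0" for k unfolding f1_def by (rule ell2_decay(1)[OF ell injm])
    show "(\<lambda>n. f2 (k - int n)) \<longlonglongrightarrow> 0" for k unfolding f2_def by (rule ell2_decay(2)[OF ell injm])
  qed
  obtain r where Qp: "Qf C C' z PP q (cnj q) (complex_of_real ap) 1 r = 0"
    and Qm: "Qf C C' z PP q (cnj q) (complex_of_real am) 1 r = 0"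
    and m1: "cmod (mu z r ap bp) < 1" and m2: "cmod (mu z r am bm) > 1" and apm: "ap \<noteq> am"
    by (rule D.X0_nonzero_result)
  define Lx where "Lx = z*cnj q*C' - z*PP*(C+C')*r - z*q*C*r^2"
  define Q0 where "Q0 = (1 + z^2*(PP^2 - q*cnj q))*r + z^2*PP*q*r^2 - z^2*cnj q*PP"
  have lp: "Q0 + complex_of_real ap * Lx = 0" using Qp unfolding Qf_lin Lx_def Q0_def .
  have lm: "Q0 + complex_of_real am * Lx = 0" using Qm unfolding Qf_lin Lx_def Q0_def .
  have "(complex_of_real ap - complex_of_real am) * Lx = (Q0 + complex_of_real ap * Lx) - (Q0 + complex_of_real am * Lx)"
    by (simp add: algebra_simps)
  also have "\<dots> = 0" unfolding lp lm by simp
  finally have "(complex_of_real ap - complex_of_real am) * Lx = 0" .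
  hence L0: "Lx = 0" using apm by simp
  hence Q00: "Q0 = 0" using lp by simp
  obtain \<sigma> l \<epsilon> where rs: "r = complex_of_real \<sigma> / q" and zl: "z = complex_of_real l" and l0: "l \<noteq> 0"
    and eps: "\<epsilon> = 1 \<or> \<epsilon> = -1" and rel: "l * (p*\<sigma> - (1 - p^2)) = \<epsilon> * cc * \<sigma>"
    and quad: "cc^2*\<sigma>^2 + p*(cc^2+1)*\<sigma> - (1 - p^2) = 0"
    using nec_alg[OF z0 L0[unfolded Lx_def] Q00[unfolded Q0_def]] by blast
  have bp2: "(cmod bp)^2 = 1 - ap^2" using abp by simp
  have bm2: "(cmod bm)^2 = 1 - am^2" using abm by simp
  have c1: "\<epsilon>*ap > \<epsilon> * sgn l * p_gamma' \<gamma> p q"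
    using m1 unfolding mu_lt_iff(1)[OF zl rs ap_lo ap_hi bp2] tau_iff(1)[OF l0 eps rel quad ap_lo ap_hi] .
  have c2: "\<epsilon>*am < \<epsilon> * sgn l * p_gamma' \<gamma> p q"
    using m2 unfolding mu_lt_iff(2)[OF zl rs am_lo am_hi bm2] tau_iff(2)[OF l0 eps rel quad am_lo am_hi] .
  have "l^2 - 1 = \<epsilon> * l * p * (cc - 1/cc)"
    by (rule core_l[OF cc_pos eps rel quad]) (use kk_pos in \<open>simp add: kk_def\<close>)
  hence lr: "l^2 - 2*(\<epsilon>*p * sinh (2*\<gamma>))*l - 1 = 0" using sinh_rel by simp
  show ?thesis unfolding rhs_char
    apply (rule exI[of _ l], rule exI[of _ \<epsilon>])
    using zl l0 eps lr c1 c2 by (simp only: mult.assoc simp_thms refl)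
qed

end

context qw
begin

lemma suff:
  assumes zin: "z \<in> sigma_minus \<gamma> p q ap am \<union> sigma_plus \<gamma> p q ap am"
  shows "\<exists>\<Psi>\<in>ell2Z2. \<Psi> \<noteq> (\<lambda>_. (0, 0)) \<and> eqs z \<Psi>"
proof -
  from zin[unfolded rhs_char] obtain l \<epsilon> where
    all: "z = complex_of_real l \<and> l \<noteq> 0 \<and> (\<epsilon> = 1 \<or> \<epsilon> = -1)
       \<and> l^2 - 2*(\<epsilon>*p * sinh (2*\<gamma>))*l - 1 = 0
       \<and> \<epsilon>*am < \<epsilon> * sgn l * p_gamma' \<gamma> p q \<and> \<epsilon> * sgn l * p_gamma' \<gamma> p q < \<epsilon>*ap"
    by (elim exE)
  have zl: "z = complex_of_real l" using all by (elim conjE)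
  have l0: "l \<noteq> 0" using all by (elim conjE)
  have eps: "\<epsilon> = 1 \<or> \<epsilon> = -1" using all by (elim conjE)
  have lr: "l^2 - 2*(\<epsilon>*p * sinh (2*\<gamma>))*l - 1 = 0" using all by (elim conjE)
  have c1: "\<epsilon>*am < \<epsilon> * sgn l * p_gamma' \<gamma> p q" using all by (elim conjE)
  have c2: "\<epsilon> * sgn l * p_gamma' \<gamma> p q < \<epsilon>*ap" using all by (elim conjE)
  have lrel: "l^2 - 1 = \<epsilon> * l * p * (cc - 1/cc)" using lr sinh_rel by simp
  define \<sigma> where "\<sigma> = l * (1 - p^2) / (l*p - \<epsilon>*cc)"
  have rel: "l * (p*\<sigma> - (1 - p^2)) = \<epsilon> * cc * \<sigma>"
    unfolding \<sigma>_def by (rule core_suff(1)[OF cc_pos p_lo p_hi eps l0 lrel])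
  have quad: "cc^2*\<sigma>^2 + p*(cc^2+1)*\<sigma> - (1 - p^2) = 0"
    unfolding \<sigma>_def by (rule core_suff(2)[OF cc_pos p_lo p_hi eps l0 lrel])
  define r where "r = complex_of_real \<sigma> / q"
  have qr: "q * r = complex_of_real \<sigma>" unfolding r_def using q_nz by simp
  have L': "cnj q*C' - PP*(C+C')*r - q*C*r^2 = 0"
  proof -
    have "q * C * (cnj q*C' - PP*(C+C')*r - q*C*r^2) = (q * cnj q) * (C * C') - PP*(C^2 + C*C')*(q*r) - C^2*(q*r)^2"
      by (simp add: power2_eq_square algebra_simps)
    also have "\<dots> = KK - PP*(C^2 + 1)*complex_of_real \<sigma> - C^2*(complex_of_real \<sigma>)^2"
      unfolding qq CC' qr by simp
    also have "\<dots> = complex_of_real ((1-p^2) - p*(cc^2+1)*\<sigma> - cc^2*\<sigma>^2)"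
      unfolding KK_def kk_def PP_def C_def by simp
    also have "\<dots> = 0" using quad by (simp add: algebra_simps)
    finally show ?thesis using q_nz C_nz by simp
  qed
  have L0: "z*cnj q*C' - z*PP*(C+C')*r - z*q*C*r^2 = 0"
  proof -
    have "z*cnj q*C' - z*PP*(C+C')*r - z*q*C*r^2 = z * (cnj q*C' - PP*(C+C')*r - q*C*r^2)"
      by (simp add: algebra_simps)
    thus ?thesis using L' by simp
  qed
  have Q00: "(1 + z^2*(PP^2 - q*cnj q))*r + z^2*PP*q*r^2 - z^2*cnj q*PP = 0"
  proof -
    have "q * ((1 + z^2*(PP^2 - q*cnj q))*r + z^2*PP*q*r^2 - z^2*cnj q*PP)
        = (1 + z^2*(PP^2 - (q*cnj q)))*(q*r) + z^2*PP*(q*r)^2 - z^2*(q*cnj q)*PP"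
      by (simp add: power2_eq_square algebra_simps)
    also have "\<dots> = complex_of_real (l^2 * (p*\<sigma> - (1 - p^2)) * (\<sigma> + p) + \<sigma>)"
      unfolding qq qr KK_def kk_def PP_def zl by (simp add: power2_eq_square algebra_simps)
    also have "\<dots> = 0" using real_Q0[OF cc_pos p_lo p_hi eps rel quad] by simp
    finally show ?thesis using q_nz by simp
  qed
  have QA: "Qf C C' z PP q (cnj q) a 1 r = 0" for a
    unfolding Qf_lin using L0 Q00 by simp
  have br: "(C' * complex_of_real (aa x) - z * PP) * mu z r (aa x) (bb x) + cnj (bb x) * r - z * q * r * mu z r (aa x) (bb x) = 0" for x
  proof -
    have "bb x * ((C' * complex_of_real (aa x) - z * PP) * mu z r (aa x) (bb x) + cnj (bb x) * r - z * q * r * mu z r (aa x) (bb x)) = 0"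
      unfolding mu_def bracket_Qf[OF bb_nz bb_cnj CC'] QA ..
    thus ?thesis using bb_nz[of x] by simp
  qed
  have bmu: "bb x * mu z r (aa x) (bb x) = z * cnj q + (C * complex_of_real (aa x) - z * PP) * r" for x
    unfolding mu_def using bb_nz[of x] by simp
  have rs: "r = complex_of_real \<sigma> / q" by (rule r_def)
  have bp2: "(cmod bp)^2 = 1 - ap^2" using abp by simp
  have bm2: "(cmod bm)^2 = 1 - am^2" using abm by simp
  have m1: "cmod (mu z r ap bp) < 1"
    unfolding mu_lt_iff(1)[OF zl rs ap_lo ap_hi bp2] tau_iff(1)[OF l0 eps rel quad ap_lo ap_hi] using c2 .
  have m2: "cmod (mu z r am bm) > 1"
    unfolding mu_lt_iff(2)[OF zl rs am_lo am_hi bm2] tau_iff(2)[OF l0 eps rel quad am_lo am_hi] using c1 .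
  define mp where "mp = mu z r ap bp"
  define mm where "mm = mu z r am bm"
  have mm0: "mm \<noteq> 0" using m2 unfolding mm_def by auto
  define \<nu> where "\<nu> = (\<lambda>x::int. if 0 \<le> x then mp ^ nat x else (inverse mm) ^ nat (-x))"
  have rec: "\<nu> (x+1) = mu z r (aa x) (bb x) * \<nu> x" for x
  proof (cases "0 \<le> x")
    case True
    have "nat (x+1) = Suc (nat x)" using True by simp
    thus ?thesis using True unfolding \<nu>_def mp_def by (simp add: aa_pos bb_pos)
  next
    case False
    show ?thesis
    proof (cases "x = -1")
      case True thus ?thesis unfolding \<nu>_def mm_def[symmetric] using mm0 by (simp add: aa_neg bb_neg mm_def)
    next
      case False2: False
      have n: "nat (-x) = Suc (nat (-(x+1)))" using False False2 by simp
      have "\<nu> x = inverse mm * \<nu> (x+1)" unfolding \<nu>_def using False False2 n by simp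
      hence "mm * \<nu> x = \<nu> (x+1)" using mm0 by simp
      thus ?thesis using False unfolding mm_def by (simp add: aa_neg bb_neg)
    qed
  qed
  define \<Psi> where "\<Psi> = (\<lambda>x. (\<nu> (x+1), r * \<nu> x))"
  have eqsz: "eqs z \<Psi>"
    unfolding eqs_def
  proof (intro allI conjI)
    fix x
    define m where "m = mu z r (aa x) (bb x)"
    have nx: "\<nu> (x+1) = m * \<nu> x" unfolding m_def by (rule rec)
    have "C' * complex_of_real (aa x) * fst (\<Psi> x) + cnj (bb x) * snd (\<Psi> x) - z * (PP * fst (\<Psi> x) + q * snd (\<Psi> (x + 1)))
       = \<nu> x * ((C' * complex_of_real (aa x) - z * PP) * m + cnj (bb x) * r - z * q * r * m)"
      unfolding \<Psi>_def nx by (simp add: algebra_simps)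
    also have "\<dots> = 0" using br[of x] unfolding m_def by simp
    finally show "C' * complex_of_real (aa x) * fst (\<Psi> x) + cnj (bb x) * snd (\<Psi> x) = z * (PP * fst (\<Psi> x) + q * snd (\<Psi> (x + 1)))"
      by simp
    have "bb x * fst (\<Psi> x) - C * complex_of_real (aa x) * snd (\<Psi> x) - z * (cnj q * fst (\<Psi> (x - 1)) - PP * snd (\<Psi> x))
       = \<nu> x * (bb x * m - (z * cnj q + (C * complex_of_real (aa x) - z * PP) * r))"
      unfolding \<Psi>_def nx by (simp add: algebra_simps)
    also have "\<dots> = 0" using bmu[of x] unfolding m_def by simp
    finally show "bb x * fst (\<Psi> x) - C * complex_of_real (aa x) * snd (\<Psi> x) = z * (cnj q * fst (\<Psi> (x - 1)) - PP * snd (\<Psi> x))"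
      by simp
  qed
  have nz: "\<Psi> \<noteq> (\<lambda>_. (0, 0))"
  proof
    assume "\<Psi> = (\<lambda>_. (0, 0))"
    hence "fst (\<Psi> (-1)) = 0" by simp
    moreover have "fst (\<Psi> (-1)) = 1" unfolding \<Psi>_def \<nu>_def by simp
    ultimately show False by simp
  qed
  define G where "G = (\<lambda>x::int. if 0 \<le> x then ((cmod mp)^2) ^ nat x else ((cmod (inverse mm))^2) ^ nat (-x))"
  have Gs: "G summable_on UNIV" unfolding G_def
  proof (rule geom_int_summable)
    show "0 \<le> (cmod mp)^2" by simp
    show "(cmod mp)^2 < 1" using m1 unfolding mp_def by (simp add: power_less_one_iff abs_square_less_1)
    show "0 \<le> (cmod (inverse mm))^2" by simp
    have "cmod (inverse mm) < 1" using m2 unfolding mm_def by (simp add: norm_inverse inverse_less_1_iff)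
    thus "(cmod (inverse mm))^2 < 1" by (simp add: abs_square_less_1)
  qed
  have Gnu: "(cmod (\<nu> x))^2 = G x" for x
    unfolding G_def \<nu>_def by (simp add: norm_power power_mult_distrib power2_eq_square)
  have Gs1: "(\<lambda>x. G (x+1)) summable_on UNIV"
  proof -
    have "bij_betw (\<lambda>x::int. x+1) UNIV UNIV"
      by (rule bij_betwI[of _ _ _ "\<lambda>x. x - 1"]) auto
    thus ?thesis using Gs summable_on_reindex_bij_betw[of "\<lambda>x::int. x+1" UNIV UNIV G] by simp
  qed
  have "(\<lambda>x. G (x+1) + (cmod r)^2 * G x) summable_on UNIV"
    by (intro summable_on_add Gs1 summable_on_cmult_right Gs)
  moreover have "(\<lambda>x. (cmod (fst (\<Psi> x)))^2 + (cmod (snd (\<Psi> x)))^2) = (\<lambda>x. G (x+1) + (cmod r)^2 * G x)"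
    unfolding \<Psi>_def by (auto simp: fun_eq_iff norm_mult power_mult_distrib Gnu[symmetric])
  ultimately have "\<Psi> \<in> ell2Z2" unfolding ell2Z2_def by simp
  thus ?thesis using nz eqsz by blast
qed

lemma main: "point_spectrum \<gamma> p q (two_phase ap am) (two_phase bp bm)
           = sigma_minus \<gamma> p q ap am \<union> sigma_plus \<gamma> p q ap am"
proof
  show "point_spectrum \<gamma> p q (two_phase ap am) (two_phase bp bm) \<subseteq> sigma_minus \<gamma> p q ap am \<union> sigma_plus \<gamma> p q ap am"
  proof
    fix z assume "z \<in> point_spectrum \<gamma> p q (two_phase ap am) (two_phase bp bm)"
    then obtain \<Psi> where "\<Psi> \<in> ell2Z2" "\<Psi> \<noteq> (\<lambda>_. (0, 0))" "walk_op \<gamma> p q aa bb \<Psi> = (\<lambda>x. (z * fst (\<Psi> x), z * snd (\<Psi> x)))"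
      unfolding point_spectrum_def by blast
    thus "z \<in> sigma_minus \<gamma> p q ap am \<union> sigma_plus \<gamma> p q ap am" using nec walk_iff by blast
  qed
next
  show "sigma_minus \<gamma> p q ap am \<union> sigma_plus \<gamma> p q ap am \<subseteq> point_spectrum \<gamma> p q (two_phase ap am) (two_phase bp bm)"
  proof
    fix z assume "z \<in> sigma_minus \<gamma> p q ap am \<union> sigma_plus \<gamma> p q ap am"
    then obtain \<Psi> where "\<Psi> \<in> ell2Z2" "\<Psi> \<noteq> (\<lambda>_. (0, 0))" "eqs z \<Psi>" using suff by blast
    thus "z \<in> point_spectrum \<gamma> p q (two_phase ap am) (two_phase bp bm)"
      unfolding point_spectrum_def using walk_iff by blast
  qed
qed

end

theorem theorem3p3:
  fixes \<gamma> p ap am :: real and q bp bm :: complex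
  assumes "-1 < p" "p < 1" "p\<^sup>2 + (cmod q)\<^sup>2 = 1"
    and "-1 < ap" "ap < 1" "-1 < am" "am < 1"
    and "ap\<^sup>2 + (cmod bp)\<^sup>2 = 1" "am\<^sup>2 + (cmod bm)\<^sup>2 = 1"
  shows "point_spectrum \<gamma> p q (two_phase ap am) (two_phase bp bm)
           = sigma_minus \<gamma> p q ap am \<union> sigma_plus \<gamma> p q ap am"
proof -
  interpret qw \<gamma> p ap am q bp bm using assms by unfold_locales
  show ?thesis by (rule main)
qed

end
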